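(* There exists a compact set $\mathbb K\subset\mathbb R^2$ which is a non-sticky Kakeya set and has two-dimensional Lebesgue measure zero. Consequently, for every $d>2$ there exists a non-sticky Kakeya set in $\mathbb R^d$ of $d$-dimensional Lebesgue measure zero.
   Context: A Kakeya set in $\mathbb R^d$ is a compact set containing a unit line segment in every direction. For $\mathbf v,\mathbf a\in\mathbb R^{d-1}$ let $L_{\mathbf v,\mathbf a}=\{(\mathbf a,0)+t(\mathbf v,1):t\in\mathbb R\}$; every line not contained in the hyperplane $\{x_d=0\}$ is of this form. The set of such lines is identified with $\mathbb R^{2d-2}$ via $(\mathbf v,\mathbf a)$, with metric $\|\mathbf a-\mathbf b\|+\|\mathbf v-\mathbf w\|$. For a Kakeya set $\mathbb K\subset\mathbb R^d$ let $\mathcal A_{\mathbb K}=\{(\mathbf v,\mathbf a)\in\mathbb R^{2d-2}: L_{\mathbf v,\mathbf a}\cap\mathbb K\text{ contains a unit line segment}\}$. The Kakeya set $\mathbb K$ is called sticky if the packing dimension of $\mathcal A_{\mathbb K}$ equals $d-1$, and non-sticky otherwise (i.e. if the packing dimension of $\mathcal A_{\mathbb K}$ is strictly larger than $d-1$). *)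

theory Defs
  imports "HOL-Analysis.Analysis"
begin

text \<open>Euclidean space R^d is represented as the product type real^'m \<times> real with
  CARD('m) = d - 1; the second (real) component is the last coordinate x_d.
  Norms/distances on this product type are the Euclidean ones.\<close>

definition kakeya_set :: "((real^'m::finite) \<times> real) set \<Rightarrow> bool" where
  "kakeya_set K \<longleftrightarrow> compact K \<and>
     (\<forall>u::(real^'m) \<times> real. norm u = 1 \<longrightarrow> (\<exists>x. closed_segment x (x + u) \<subseteq> K))"

definition kline :: "(real^'m::finite) \<Rightarrow> (real^'m) \<Rightarrow> ((real^'m::finite) \<times> real) set" where
  "kline v a = {(a + t *\<^sub>R v, t) | t. True}"

definition line_set :: "((real^'m::finite) \<times> real) set \<Rightarrow> ((real^'m::finite) \<times> (real^'m)) set" where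
  "line_set K = {(v, a). \<exists>p q. dist p q = 1 \<and> closed_segment p q \<subseteq> kline v a \<inter> K}"

definition line_dist :: "((real^'m::finite) \<times> (real^'m)) \<Rightarrow> ((real^'m::finite) \<times> (real^'m)) \<Rightarrow> real" where
  "line_dist = (\<lambda>(v, a) (w, b). norm (a - b) + norm (v - w))"

text \<open>Packing premeasure: P^s_0(E) = lim_{delta -> 0} sup sum (2 r_i)^s over disjoint families
  of closed balls B(x_i,r_i) with x_i in E and 0 < r_i <= delta (finite subfamilies suffice
  for the supremum of nonnegative sums).\<close>
definition mball :: "('a \<Rightarrow> 'a \<Rightarrow> real) \<Rightarrow> 'a \<Rightarrow> real \<Rightarrow> 'a set" where
  "mball d x r = {y. d x y \<le> r}"

definition packing_premeasure :: "('a \<Rightarrow> 'a \<Rightarrow> real) \<Rightarrow> real \<Rightarrow> 'a set \<Rightarrow> ennreal" where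
  "packing_premeasure d s E =
     (INF \<delta>\<in>{0<..}. SUP P\<in>{P. finite P \<and> (\<forall>(x, r)\<in>P. x \<in> E \<and> 0 < r \<and> r \<le> \<delta>) \<and>
              (\<forall>(x, r)\<in>P. \<forall>(y, t)\<in>P. (x, r) \<noteq> (y, t) \<longrightarrow> mball d x r \<inter> mball d y t = {})}.
        (\<Sum>(x, r)\<in>P. ennreal ((2 * r) powr s)))"

definition packing_measure :: "('a \<Rightarrow> 'a \<Rightarrow> real) \<Rightarrow> real \<Rightarrow> 'a set \<Rightarrow> ennreal" where
  "packing_measure d s E =
     (INF F\<in>{F :: nat \<Rightarrow> 'a set. E \<subseteq> (\<Union>i. F i)}. (\<Sum>i. packing_premeasure d s (F i)))"

definition packing_dim :: "('a \<Rightarrow> 'a \<Rightarrow> real) \<Rightarrow> 'a set \<Rightarrow> ereal" where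
  "packing_dim d E = Sup {ereal s | s. 0 \<le> s \<and> packing_measure d s E = \<infinity>}"

definition non_sticky :: "((real^'m::finite) \<times> real) set \<Rightarrow> bool" where
  "non_sticky K \<longleftrightarrow> packing_dim line_dist (line_set K) > ereal (real CARD('m))"

end

theory Submission
  imports Defs
begin


definition cG :: "nat set" where "cG = {l. \<exists>k::nat. 36^k < l \<and> l \<le> 6*36^k}"

fun cD :: "nat \<Rightarrow> real set" where
  "cD 0 = {0}"
| "cD (Suc n) = (if Suc n \<in> cG then cD n \<union> (\<lambda>p. p + (1/2)^(Suc n)) ` cD n else cD n)"

definition cI :: "nat \<Rightarrow> real set" where "cI n = (\<Union>p\<in>cD n. {p..p + (1/2)^n})"

definition Cset :: "real set" where "Cset = (\<Inter>n. cI n)"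

lemma finite_cD: "finite (cD n)"
  by (induction n) auto

lemma cD_range: "p \<in> cD n \<Longrightarrow> 0 \<le> p \<and> p + (1/2)^n \<le> 1"
proof (induction n arbitrary: p)
  case 0 then show ?case by simp
next
  case (Suc n)
  show ?case
  proof (cases "Suc n \<in> cG")
    case True
    with Suc.prems consider "p \<in> cD n" | q where "q \<in> cD n" "p = q + (1/2)^Suc n" by auto
    then show ?thesis
    proof cases
      case 1
      have "(0::real) \<le> (1/2)^n" by simp
      have "(1/2::real)^Suc n = (1/2)^n/2" by simp
      with 1 Suc.IH[of p] \<open>(0::real) \<le> (1/2)^n\<close> show ?thesis by linarith
    next
      case 2 with Suc.IH[of q] show ?thesis by simp
    qed
  next
    case False
    have "(1/2::real)^Suc n = (1/2)^n/2" by simp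
    moreover have "(0::real) \<le> (1/2)^n" by simp
    moreover have "p \<in> cD n" using Suc.prems False by simp
    moreover have "0 \<le> p \<and> p + (1/2)^n \<le> 1" using Suc.IH \<open>p \<in> cD n\<close> by blast
    ultimately show ?thesis by linarith
  qed
qed

lemma cD_Suc_mono: "cD n \<subseteq> cD (Suc n)"
  by auto

lemma cD_mono: "m \<le> n \<Longrightarrow> cD m \<subseteq> cD n"
  by (induction n rule: dec_induct) (use cD_Suc_mono in blast)+

lemma cI_Suc: "cI (Suc n) \<subseteq> cI n"
proof
  fix x assume "x \<in> cI (Suc n)"
  then obtain p where p: "p \<in> cD (Suc n)" "p \<le> x" "x \<le> p + (1/2)^Suc n" by (auto simp: cI_def)
  show "x \<in> cI n"
  proof (cases "Suc n \<in> cG")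
    case True
    with p consider "p \<in> cD n" | q where "q \<in> cD n" "p = q + (1/2)^Suc n" by auto
    then show ?thesis
    proof cases
      case 1 then show ?thesis using p unfolding cI_def by (auto intro!: bexI[of _ p])
    next
      case 2 then show ?thesis using p unfolding cI_def by (auto intro!: bexI[of _ q])
    qed
  next
    case False with p show ?thesis unfolding cI_def by (auto intro!: bexI[of _ p])
  qed
qed

lemma cI_mono: "m \<le> n \<Longrightarrow> cI n \<subseteq> cI m"
  by (induction n rule: dec_induct) (use cI_Suc in blast)+

lemma cD_sub_Cset: "p \<in> cD n \<Longrightarrow> p \<in> Cset"
proof -
  assume p: "p \<in> cD n"
  have "p \<in> cI m" for m
  proof (cases "n \<le> m")
    case True
    then have "p \<in> cD m" using cD_mono p by blast
    then show ?thesis unfolding cI_def by auto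
  next
    case False
    have "p \<in> cI n" using p unfolding cI_def by auto
    then show ?thesis using cI_mono[of m n] False by auto
  qed
  then show ?thesis by (auto simp: Cset_def)
qed

lemma Cset_approx: "x \<in> Cset \<Longrightarrow> \<exists>p\<in>cD n. p \<le> x \<and> x \<le> p + (1/2)^n"
  by (auto simp: Cset_def cI_def)

lemma Cset_range: "x \<in> Cset \<Longrightarrow> 0 \<le> x \<and> x \<le> 1"
  using Cset_approx[of x 0] by auto

lemma zero_in_Cset: "0 \<in> Cset"
  using cD_sub_Cset[of 0 0] by simp

lemma closed_cI: "closed (cI n)"
  unfolding cI_def using finite_cD by (intro closed_UN) auto

lemma compact_Cset: "compact Cset"
proof -
  have "closed Cset" unfolding Cset_def using closed_cI by auto
  moreover have "bounded Cset"
    by (rule bounded_subset[of "{0..1}"]) (auto dest: Cset_range)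
  ultimately show ?thesis by (simp add: compact_eq_bounded_closed)
qed

lemma full_block:
  assumes "\<And>l. n0 < l \<Longrightarrow> l \<le> n0 + d \<Longrightarrow> l \<in> cG" "p \<in> cD n0" "j < 2^d"
  shows "p + real j * (1/2)^(n0+d) \<in> cD (n0+d)"
  using assms
proof (induction d arbitrary: j)
  case 0 then show ?case by simp
next
  case (Suc d)
  have G: "Suc (n0 + d) \<in> cG" using Suc.prems(1)[of "Suc (n0+d)"] by simp
  have IH: "p + real j' * (1/2)^(n0+d) \<in> cD (n0+d)" if "j' < 2^d" for j'
    using Suc.IH[of j'] Suc.prems that by auto
  have "j div 2 < 2^d" using Suc.prems(3) by (simp add: less_mult_imp_div_less)
  then have I: "p + real (j div 2) * (1/2)^(n0+d) \<in> cD (n0+d)" by (rule IH)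
  have j: "real j = 2 * real (j div 2) + real (j mod 2)"
    by (metis of_nat_add of_nat_mult div_mult_mod_eq mult.commute of_nat_numeral)
  have e: "p + real j * (1/2)^(n0 + Suc d) = p + real (j div 2) * (1/2)^(n0+d) + real (j mod 2) * (1/2)^(Suc (n0+d))"
    by (simp add: j algebra_simps)
  show ?case
  proof (cases "j mod 2 = 0")
    case True
    then show ?thesis using I G e by simp
  next
    case False
    then have "j mod 2 = 1" by simp
    then have "p + real j * (1/2)^(n0 + Suc d) = (p + real (j div 2) * (1/2)^(n0+d)) + (1/2)^(Suc (n0+d))"
      using e by simp
    then show ?thesis using I G by (simp del: power_Suc add: image_iff)
  qed
qed

fun ccount :: "nat \<Rightarrow> nat" where
  "ccount 0 = 0"
| "ccount (Suc n) = ccount n + (if Suc n \<in> cG then 1 else 0)"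

lemma card_cD: "card (cD n) \<le> 2 ^ ccount n"
proof (induction n)
  case 0 then show ?case by simp
next
  case (Suc n)
  show ?case
  proof (cases "Suc n \<in> cG")
    case True
    have "card (cD (Suc n)) \<le> card (cD n) + card ((\<lambda>p. p + (1/2)^(Suc n)) ` cD n)"
      using True by (simp add: card_Un_le)
    also have "\<dots> \<le> 2 * card (cD n)" using card_image_le[OF finite_cD] by simp
    finally show ?thesis using Suc True by simp
  next
    case False then show ?thesis using Suc by simp
  qed
qed

lemma ccount_le: "ccount n \<le> n"
  by (induction n) auto

lemma ccount_const: "m \<le> n \<Longrightarrow> (\<And>l. m < l \<Longrightarrow> l \<le> n \<Longrightarrow> l \<notin> cG) \<Longrightarrow> ccount n = ccount m"
  by (induction n rule: dec_induct) auto

lemma ccount_sparse: "ccount (36^(Suc k)) \<le> 6 * 36^k"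
proof -
  have "ccount (36^(Suc k)) = ccount (6*36^k)"
  proof (rule ccount_const)
    show "(6::nat) * 36 ^ k \<le> 36 ^ Suc k" by simp
    fix l :: nat assume l: "6 * 36 ^ k < l" "l \<le> 36 ^ Suc k"
    show "l \<notin> cG"
    proof
      assume "l \<in> cG"
      then obtain j where j: "36^j < l" "l \<le> 6*36^j" by (auto simp: cG_def)
      show False
      proof (cases "j \<le> k")
        case True
        then have "(36::nat)^j \<le> 36^k" by (simp add: power_increasing)
        then show False using j l by linarith
      next
        case False
        then have "(36::nat)^Suc k \<le> 36^j" by (intro power_increasing) auto
        then show False using j l by linarith
      qed
    qed
  qed
  then show ?thesis using ccount_le[of "6*36^k"] by simp
qed

lemma full_block_G: "36^k < l \<Longrightarrow> l \<le> 6*36^k \<Longrightarrow> l \<in> cG"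
  by (auto simp: cG_def)


definition genK :: "(real \<Rightarrow> real) \<Rightarrow> (real \<times> real) set" where
  "genK a = {(a v + t * v, t) | v t. v \<in> {-1..1} \<and> t \<in> {0..1}}"

definition KB :: "(real \<Rightarrow> real) \<Rightarrow> (real \<times> real) set" where
  "KB a = closure (genK a)"

definition strip :: "real \<Rightarrow> real \<Rightarrow> (real \<times> real) set" where
  "strip t1 t2 = {z. t1 \<le> snd z \<and> snd z \<le> t2}"

definition obox :: "real \<times> real \<times> real \<times> real \<Rightarrow> (real \<times> real) set" where
  "obox r = (case r of (a,b,c,d) \<Rightarrow> {a<..<b} \<times> {c<..<d})"

definition area :: "real \<times> real \<times> real \<times> real \<Rightarrow> real" where
  "area r = (case r of (a,b,c,d) \<Rightarrow> (b-a)*(d-c))"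

definition okbox :: "real \<times> real \<times> real \<times> real \<Rightarrow> bool" where
  "okbox r = (case r of (a,b,c,d) \<Rightarrow> a \<le> b \<and> c \<le> d)"

definition boxcov :: "(real \<times> real) set \<Rightarrow> real \<Rightarrow> bool" where
  "boxcov S e \<longleftrightarrow> (\<exists>F. finite F \<and> (\<forall>r\<in>F. okbox r) \<and> S \<subseteq> (\<Union>r\<in>F. obox r) \<and> sum area F < e)"

lemma area_nonneg: "okbox r \<Longrightarrow> 0 \<le> area r"
  by (cases r) (auto simp: okbox_def area_def)

lemma open_obox: "open (obox r)"
  by (cases r) (auto simp: obox_def intro: open_Times)

lemma boxcov_mono: "boxcov S e \<Longrightarrow> T \<subseteq> S \<Longrightarrow> e \<le> e' \<Longrightarrow> boxcov T e'"
  unfolding boxcov_def by (meson dual_order.trans order_less_le_trans)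

lemma boxcov_empty: "e > 0 \<Longrightarrow> boxcov {} e"
  unfolding boxcov_def by (rule exI[of _ "{}"]) auto

lemma boxcov_Un: "boxcov A e1 \<Longrightarrow> boxcov B e2 \<Longrightarrow> boxcov (A \<union> B) (e1 + e2)"
proof -
  assume "boxcov A e1" "boxcov B e2"
  then obtain F1 F2 where F1: "finite F1" "\<forall>r\<in>F1. okbox r" "A \<subseteq> (\<Union>r\<in>F1. obox r)" "sum area F1 < e1"
    and F2: "finite F2" "\<forall>r\<in>F2. okbox r" "B \<subseteq> (\<Union>r\<in>F2. obox r)" "sum area F2 < e2"
    unfolding boxcov_def by blast
  have "sum area (F1 \<union> F2) \<le> sum area F1 + sum area F2"
  proof -
    have "sum area (F1 \<union> F2) + sum area (F1 \<inter> F2) = sum area F1 + sum area F2"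
      using F1 F2 by (intro sum.union_inter) auto
    moreover have "0 \<le> sum area (F1 \<inter> F2)" using F1 by (intro sum_nonneg) (auto intro: area_nonneg)
    ultimately show ?thesis by linarith
  qed
  then show ?thesis unfolding boxcov_def using F1 F2
    by (intro exI[of _ "F1 \<union> F2"]) auto
qed

lemma sum_Un_le_dummy: True ..

definition bswap :: "real \<times> real \<times> real \<times> real \<Rightarrow> real \<times> real \<times> real \<times> real" where
  "bswap r = (case r of (a,b,c,d) \<Rightarrow> (c,d,a,b))"

lemma boxcov_swap: "boxcov S e \<Longrightarrow> boxcov (prod.swap ` S) e"
proof -
  assume "boxcov S e"
  then obtain F where F: "finite F" "\<forall>r\<in>F. okbox r" "S \<subseteq> (\<Union>r\<in>F. obox r)" "sum area F < e"
    unfolding boxcov_def by blast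
  have inj: "inj bswap" unfolding inj_def bswap_def by auto
  have "sum area (bswap ` F) = sum (area \<circ> bswap) F"
    by (rule sum.reindex) (use inj in \<open>auto simp: inj_on_def\<close>)
  also have "\<dots> = sum area F"
    by (intro sum.cong) (auto simp: area_def bswap_def split: prod.splits)
  finally have s: "sum area (bswap ` F) = sum area F" .
  have "prod.swap ` S \<subseteq> (\<Union>r\<in>bswap ` F. obox r)"
  proof
    fix z assume "z \<in> prod.swap ` S"
    then obtain y where y: "y \<in> S" "z = prod.swap y" by auto
    then obtain r where r: "r \<in> F" "y \<in> obox r" using F(3) by auto
    then have "z \<in> obox (bswap r)" using y
      by (cases r) (auto simp: obox_def bswap_def)
    then show "z \<in> (\<Union>r\<in>bswap ` F. obox r)" using r by auto
  qed
  moreover have "\<forall>r\<in>bswap ` F. okbox r" using F(2)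
    by (auto simp: okbox_def bswap_def split: prod.splits)
  ultimately show ?thesis unfolding boxcov_def using F s
    by (intro exI[of _ "bswap ` F"]) auto
qed

lemma genK_strip: "genK a \<subseteq> strip 0 1"
  by (auto simp: genK_def strip_def)

lemma closed_strip: "closed (strip t1 t2)"
proof -
  have "strip t1 t2 = snd -` {t1..t2}" by (auto simp: strip_def)
  then show ?thesis by (simp add: closed_vimage continuous_on_snd)
qed

lemma KB_strip: "KB a \<subseteq> strip 0 1"
  unfolding KB_def by (intro closure_minimal genK_strip closed_strip)

lemma genK_bounded:
  assumes "\<forall>v\<in>{-1..1}. \<bar>a v\<bar> \<le> A"
  shows "genK a \<subseteq> cbox (-(A+1), 0) (A+1, 1)"
proof
  fix z assume "z \<in> genK a"
  then obtain v t where z: "z = (a v + t * v, t)" "v \<in> {-1..1}" "t \<in> {0..1}"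
    by (auto simp: genK_def)
  have "\<bar>t * v\<bar> \<le> 1" using z by (auto simp: abs_mult intro: mult_le_one)
  moreover have "\<bar>a v\<bar> \<le> A" using assms z(2) by blast
  ultimately show "z \<in> cbox (-(A+1), 0) (A+1, 1)" using z
    by (auto simp: cbox_Pair_eq abs_le_iff)
qed

lemma compact_KB:
  assumes "\<forall>v\<in>{-1..1}. \<bar>a v\<bar> \<le> A"
  shows "compact (KB a)"
proof -
  have "bounded (genK a)" using genK_bounded[OF assms] bounded_cbox bounded_subset by blast
  then show ?thesis unfolding KB_def by (simp add: compact_closure)
qed

lemma KB_perturb:
  assumes "\<forall>v\<in>{-1..1}. \<bar>b v - a v\<bar> \<le> \<eta>" "\<eta> \<ge> 0" "\<forall>v\<in>{-1..1}. \<bar>a v\<bar> \<le> A"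
  shows "KB b \<subseteq> (\<Union>x\<in>KB a. \<Union>y\<in>{-\<eta>..\<eta>} \<times> {0}. {x + y})"
proof -
  let ?T = "{-\<eta>..\<eta>} \<times> {0::real}"
  have cT: "compact ?T" by (intro compact_Times) auto
  have cl: "closed (\<Union>x\<in>KB a. \<Union>y\<in>?T. {x + y})"
    by (intro closed_compact_sums cT) (simp add: KB_def)
  have "genK b \<subseteq> (\<Union>x\<in>KB a. \<Union>y\<in>?T. {x + y})"
  proof
    fix z assume "z \<in> genK b"
    then obtain v t where z: "z = (b v + t * v, t)" "v \<in> {-1..1}" "t \<in> {0..1}"
      by (auto simp: genK_def)
    have x: "(a v + t * v, t) \<in> KB a" unfolding KB_def
      using z by (intro closure_subset[THEN subsetD]) (auto simp: genK_def)
    have "\<bar>b v - a v\<bar> \<le> \<eta>" using assms(1) z(2) by blast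
    then have y: "(b v - a v, 0) \<in> ?T" by (auto simp: abs_le_iff)
    have "z = (a v + t * v, t) + (b v - a v, 0)" using z by simp
    then show "z \<in> (\<Union>x\<in>KB a. \<Union>y\<in>?T. {x + y})" using x y by blast
  qed
  then show ?thesis unfolding KB_def[of b] by (intro closure_minimal cl)
qed

lemma boxcov_open:
  assumes bnd: "\<forall>v\<in>{-1..1}. \<bar>a v\<bar> \<le> A" and cov: "boxcov (KB a \<inter> strip t1 t2) e"
  shows "\<exists>\<eta>>0. \<forall>b. (\<forall>v\<in>{-1..1}. \<bar>b v - a v\<bar> \<le> \<eta>) \<longrightarrow> boxcov (KB b \<inter> strip t1 t2) e"
proof -
  obtain F where F: "finite F" "\<forall>r\<in>F. okbox r" "KB a \<inter> strip t1 t2 \<subseteq> (\<Union>r\<in>F. obox r)" "sum area F < e"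
    using cov unfolding boxcov_def by blast
  let ?U = "\<Union>r\<in>F. obox r"
  let ?S = "KB a \<inter> strip t1 t2"
  have cS: "compact ?S" using compact_KB[OF bnd] closed_strip by (simp add: compact_Int_closed)
  have oU: "open ?U" using open_obox by auto
  obtain \<epsilon> where \<epsilon>: "\<epsilon> > 0" "\<And>x. x \<in> ?S \<Longrightarrow> \<exists>G\<in>{?U}. ball x \<epsilon> \<subseteq> G"
    using Heine_Borel_lemma[OF cS, of "{?U}"] F(3) oU by auto
  show ?thesis
  proof (intro exI[of _ "\<epsilon>/2"] conjI allI impI)
    show "\<epsilon>/2 > 0" using \<epsilon> by simp
    fix b assume b: "\<forall>v\<in>{-1..1}. \<bar>b v - a v\<bar> \<le> \<epsilon>/2"
    have "KB b \<inter> strip t1 t2 \<subseteq> ?U"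
    proof
      fix z assume z: "z \<in> KB b \<inter> strip t1 t2"
      then obtain x y where xy: "x \<in> KB a" "y \<in> {-\<epsilon>/2..\<epsilon>/2} \<times> {0}" "z = x + y"
        using KB_perturb[OF b _ bnd] \<epsilon> by fastforce
      have "x \<in> ?S" using xy z by (auto simp: strip_def)
      moreover have "z \<in> ball x \<epsilon>" using xy \<epsilon>
        by (auto simp: dist_norm norm_Pair)
      ultimately show "z \<in> ?U" using \<epsilon>(2) by blast
    qed
    then show "boxcov (KB b \<inter> strip t1 t2) e" unfolding boxcov_def using F by blast
  qed
qed


definition idx :: "nat \<Rightarrow> real \<Rightarrow> nat" where "idx M v = nat \<lfloor>real M * (v + 1)\<rfloor>"

definition SL :: "(real \<Rightarrow> real) set" where
  "SL = {g. \<exists>M \<alpha> \<beta>. M > 0 \<and> (\<forall>v. g v = \<alpha> (idx M v) + \<beta> (idx M v) * v)}"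

lemma idx_props:
  assumes "v \<in> {-1..1}" "M > 0"
  shows "idx M v \<le> 2*M" "real (idx M v) \<le> real M * (v+1)" "real M * (v+1) < real (idx M v) + 1"
proof -
  have nn: "0 \<le> real M * (v+1)" using assms by auto
  have le: "real M * (v+1) \<le> 2 * real M" using assms by auto
  have e: "real (idx M v) = of_int \<lfloor>real M * (v + 1)\<rfloor>" unfolding idx_def using nn by simp
  show "real (idx M v) \<le> real M * (v+1)" "real M * (v+1) < real (idx M v) + 1"
    unfolding e by linarith+
  then have "real (idx M v) \<le> real (2*M)" using le by simp
  then show "idx M v \<le> 2*M" by linarith
qed

lemma idx_mult:
  assumes "v \<ge> -1" "L > 0"
  shows "idx M v = idx (M*L) v div L"
proof -
  have nn: "0 \<le> real (M*L) * (v+1)" using assms by auto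
  have "\<lfloor>real (M*L) * (v + 1)\<rfloor> div int L = \<lfloor>real (M*L) * (v + 1) / real_of_int (int L)\<rfloor>"
    by (rule floor_divide_real_eq_div[symmetric]) simp
  also have "real (M*L) * (v + 1) / real_of_int (int L) = real M * (v+1)" using assms by simp
  finally have "\<lfloor>real M * (v+1)\<rfloor> = \<lfloor>real (M*L) * (v + 1)\<rfloor> div int L" by simp
  then show ?thesis unfolding idx_def using nn
    by (simp add: nat_div_distrib)
qed

lemma SL_bounded: "g \<in> SL \<Longrightarrow> \<exists>A. \<forall>v\<in>{-1..1}. \<bar>g v\<bar> \<le> A"
proof -
  assume "g \<in> SL"
  then obtain M \<alpha> \<beta> where M: "M > 0" "\<And>v. g v = \<alpha> (idx M v) + \<beta> (idx M v) * v"
    unfolding SL_def by blast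
  show ?thesis
  proof (intro exI ballI)
    fix v :: real assume v: "v \<in> {-1..1}"
    let ?i = "idx M v"
    have i: "?i \<in> {..2*M}" using idx_props[OF v M(1)] by simp
    have "\<bar>g v\<bar> \<le> \<bar>\<alpha> ?i\<bar> + \<bar>\<beta> ?i\<bar> * \<bar>v\<bar>" unfolding M(2) by (metis abs_mult abs_triangle_ineq)
    also have "\<dots> \<le> \<bar>\<alpha> ?i\<bar> + \<bar>\<beta> ?i\<bar>" using v by (auto intro: mult_left_le)
    also have "\<dots> \<le> (\<Sum>i\<le>2*M. \<bar>\<alpha> i\<bar> + \<bar>\<beta> i\<bar>)"
      using i by (intro member_le_sum) auto
    finally show "\<bar>g v\<bar> \<le> (\<Sum>i\<le>2*M. \<bar>\<alpha> i\<bar> + \<bar>\<beta> i\<bar>)" .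
  qed
qed


lemma density:
  assumes g: "g \<in> SL" and \<eta>: "\<eta> > 0" and t0: "0 \<le> t0" "t0 \<le> 1" and w: "w > 0"
  shows "\<exists>h\<in>SL. (\<forall>v\<in>{-1..1}. \<bar>h v - g v\<bar> \<le> \<eta>) \<and> boxcov (KB h \<inter> strip (t0-w) (t0+w)) (1000*w^2)"
proof -
  obtain M \<alpha> \<beta> where M: "M > 0" "\<And>v. g v = \<alpha> (idx M v) + \<beta> (idx M v) * v"
    using g unfolding SL_def by blast
  define Bb where "Bb = (\<Sum>i\<le>2*M. \<bar>\<beta> i\<bar>)"
  have Bb0: "0 \<le> Bb" unfolding Bb_def by (intro sum_nonneg) auto
  define L where "L = nat \<lceil>(Bb+1)/\<eta>\<rceil> + 1"
  have L0: "L > 0" unfolding L_def by simp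
  define Mp where "Mp = M * L"
  have Mp0: "Mp > 0" using M L0 unfolding Mp_def by simp
  have "real L \<ge> (Bb+1)/\<eta>" unfolding L_def by linarith
  moreover have "real Mp \<ge> real L"
  proof -
    have "1 \<le> real M" using M by simp
    then show ?thesis unfolding Mp_def using mult_right_mono[of 1 "real M" "real L"] by simp
  qed
  ultimately have "real Mp \<ge> (Bb+1)/\<eta>" by linarith
  then have MpB: "(Bb+1)/real Mp \<le> \<eta>" using \<eta> Mp0 Bb0
    by (simp add: divide_le_eq mult.commute pos_divide_le_eq)
  define vj where "vj j = real j / real Mp - 1" for j :: nat
  define c where "c j = g (vj j) + t0 * vj j" for j
  define h where "h v = c (idx Mp v) + (-t0) * v" for v
  have hSL: "h \<in> SL" unfolding SL_def mem_Collect_eq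
    by (rule exI[of _ Mp], rule exI[of _ c], rule exI[of _ "\<lambda>_. -t0"]) (simp add: h_def Mp0)
  have vj_props: "vj (idx Mp v) \<le> v" "v < vj (idx Mp v) + 1/real Mp" if v: "v \<in> {-1..1}" for v
  proof -
    note ip = idx_props[OF v Mp0]
    have "real (idx Mp v) / real Mp \<le> v + 1" using ip(2) Mp0
      by (simp add: pos_divide_le_eq algebra_simps)
    then show "vj (idx Mp v) \<le> v" unfolding vj_def by simp
    have "(real (idx Mp v) + 1) / real Mp > v + 1"
      using ip(3) Mp0 by (simp add: pos_less_divide_eq algebra_simps)
    then have "real (idx Mp v) / real Mp + 1/real Mp > v + 1" by (simp add: add_divide_distrib)
    then show "v < vj (idx Mp v) + 1/real Mp" unfolding vj_def by simp
  qed
  have close: "\<bar>h v - g v\<bar> \<le> \<eta>" if v: "v \<in> {-1..1}" for v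
  proof -
    let ?j = "idx Mp v"
    let ?i = "idx M v"
    have i1: "?i = ?j div L" unfolding Mp_def using v L0 by (intro idx_mult) auto
    have "real M * (vj ?j + 1) = real ?j / real L"
      unfolding vj_def Mp_def using M by simp
    then have i2: "idx M (vj ?j) = ?j div L"
      unfolding idx_def by (simp add: floor_divide_of_nat_eq)
    have gv: "g (vj ?j) = \<alpha> ?i + \<beta> ?i * vj ?j" using M(2) i1 i2 by simp
    have "h v - g v = (\<beta> ?i + t0) * (vj ?j - v)"
      unfolding h_def c_def gv M(2)[of v] by (simp add: algebra_simps)
    then have "\<bar>h v - g v\<bar> = \<bar>\<beta> ?i + t0\<bar> * (v - vj ?j)" using vj_props(1)[OF v]
      by (simp add: abs_mult)
    also have "\<dots> \<le> (Bb + 1) * (1/real Mp)"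
    proof (rule mult_mono)
      have "?i \<in> {..2*M}" using idx_props[OF v M(1)] by simp
      then have "\<bar>\<beta> ?i\<bar> \<le> Bb" unfolding Bb_def by (intro member_le_sum) auto
      then show "\<bar>\<beta> ?i + t0\<bar> \<le> Bb + 1" using t0 by linarith
      show "v - vj ?j \<le> 1/real Mp" using vj_props(2)[OF v] by linarith
    qed (use Bb0 vj_props(1)[OF v] in auto)
    also have "\<dots> \<le> \<eta>" using MpB by simp
    finally show ?thesis .
  qed
  define W where "W = 2*w"
  have W0: "W > 0" using w unfolding W_def by simp
  define Ost where "Ost = {z::real\<times>real. t0 - W < snd z \<and> snd z < t0 + W}"
  have oO: "open Ost"
  proof -
    have "Ost = snd -` {t0-W<..<t0+W}" unfolding Ost_def by auto
    then show ?thesis by (simp add: open_vimage continuous_on_snd)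
  qed
  define hq where "hq = 2*W / real Mp"
  have hq0: "hq > 0" unfolding hq_def using W0 Mp0 by simp
  define \<tau> where "\<tau> i = t0 - W + real i * hq" for i :: nat
  define e where "e = hq + W / real Mp"
  have e0: "e > 0" unfolding e_def using hq0 W0 Mp0 by (intro add_pos_pos divide_pos_pos) auto
  define x0 where "x0 j i = c j + (\<tau> i - t0) * vj j" for j i
  define cbx where "cbx ji = (case ji of (j,i) \<Rightarrow> cbox (x0 j i - e, \<tau> i) (x0 j i + e, \<tau> i + hq))" for ji
  define bx where "bx ji = (case ji of (j,i) \<Rightarrow> (x0 j i - 2*e, x0 j i + 2*e, \<tau> i - hq, \<tau> i + 2*hq))" for ji
  define I where "I = {..2*Mp} \<times> {..<Mp}"
  have finI: "finite I" unfolding I_def by simp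
  have cover1: "genK h \<inter> Ost \<subseteq> (\<Union>ji\<in>I. cbx ji)"
  proof
    fix z assume z: "z \<in> genK h \<inter> Ost"
    then obtain v t where zt: "z = (h v + t * v, t)" "v \<in> {-1..1}" "t \<in> {0..1}"
      by (auto simp: genK_def)
    have tW: "t0 - W < t" "t < t0 + W" using z zt unfolding Ost_def by auto
    define j where "j = idx Mp v"
    have j: "j \<le> 2*Mp" unfolding j_def using idx_props[OF zt(2) Mp0] by simp
    define q where "q = (t - (t0 - W)) / hq"
    have q0: "q \<ge> 0" unfolding q_def using tW hq0 by simp
    have qQ: "q < real Mp"
    proof -
      have "t - (t0 - W) < 2*W" using tW by linarith
      then have "(t - (t0-W))/hq < (2*W)/hq" using hq0 by (rule divide_strict_right_mono)
      moreover have "(2*W)/hq = real Mp" unfolding hq_def using W0 Mp0 by simp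
      ultimately show ?thesis unfolding q_def by simp
    qed
    define i where "i = nat \<lfloor>q\<rfloor>"
    have ir: "real i \<le> q" "q < real i + 1" unfolding i_def using q0 by linarith+
    have iQ: "i < Mp" using ir qQ by linarith
    have ti1: "\<tau> i \<le> t"
    proof -
      have "real i * hq \<le> q * hq" using ir hq0 by (simp add: mult_right_mono)
      moreover have "q * hq = t - (t0-W)" unfolding q_def using hq0 by simp
      ultimately show ?thesis unfolding \<tau>_def by linarith
    qed
    have ti2: "t < \<tau> i + hq"
    proof -
      have "q * hq < (real i + 1) * hq" using ir hq0 by (simp add: mult_strict_right_mono)
      moreover have "q * hq = t - (t0-W)" unfolding q_def using hq0 by simp
      moreover have "(real i + 1) * hq = real i * hq + hq" by (simp add: algebra_simps)
      ultimately show ?thesis unfolding \<tau>_def by linarith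
    qed
    have tauW: "\<bar>\<tau> i - t0\<bar> \<le> W"
    proof -
      have "\<tau> i \<ge> t0 - W" unfolding \<tau>_def using hq0 by simp
      then show ?thesis using ti1 tW by linarith
    qed
    have vv: "\<bar>v - vj j\<bar> \<le> 1/real Mp" using vj_props[OF zt(2)] unfolding j_def by linarith
    have "h v + t * v - x0 j i = (t - \<tau> i) * v + (\<tau> i - t0) * (v - vj j)"
      unfolding h_def x0_def j_def by (simp add: algebra_simps)
    then have "\<bar>h v + t * v - x0 j i\<bar> \<le> \<bar>t - \<tau> i\<bar> * \<bar>v\<bar> + \<bar>\<tau> i - t0\<bar> * \<bar>v - vj j\<bar>"
      by (metis abs_mult abs_triangle_ineq)
    also have "\<dots> \<le> hq * 1 + W * (1/real Mp)"
    proof (rule add_mono; rule mult_mono)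
      show "\<bar>t - \<tau> i\<bar> \<le> hq" using ti1 ti2 by simp
      show "\<bar>v\<bar> \<le> 1" using zt by auto
    qed (use tauW vv hq0 W0 in auto)
    finally have "\<bar>h v + t * v - x0 j i\<bar> \<le> e" unfolding e_def by simp
    then have "z \<in> cbx (j,i)" unfolding cbx_def using zt ti1 ti2
      by (auto simp: cbox_Pair_eq abs_le_iff)
    moreover have "(j,i) \<in> I" unfolding I_def using j iQ by simp
    ultimately show "z \<in> (\<Union>ji\<in>I. cbx ji)" by blast
  qed
  have clU: "closed (\<Union>ji\<in>I. cbx ji)" using finI
    by (intro closed_UN) (auto simp: cbx_def)
  have strip_O: "strip (t0-w) (t0+w) \<subseteq> Ost" unfolding strip_def Ost_def W_def using w by auto
  have cbx_bx: "cbx ji \<subseteq> obox (bx ji)" for ji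
    using e0 hq0 by (cases ji) (auto simp: cbx_def bx_def obox_def cbox_Pair_eq)
  have cov: "KB h \<inter> strip (t0-w) (t0+w) \<subseteq> (\<Union>r\<in>bx ` I. obox r)"
  proof -
    have "KB h \<inter> strip (t0-w) (t0+w) \<subseteq> Ost \<inter> closure (genK h)" using strip_O unfolding KB_def by auto
    also have "\<dots> \<subseteq> closure (Ost \<inter> genK h)" by (rule open_Int_closure_subset[OF oO])
    also have "\<dots> \<subseteq> (\<Union>ji\<in>I. cbx ji)" using cover1 clU by (intro closure_minimal) auto
    also have "\<dots> \<subseteq> (\<Union>r\<in>bx ` I. obox r)" using cbx_bx by blast
    finally show ?thesis .
  qed
  have ok: "\<forall>r\<in>bx ` I. okbox r" using e0 hq0 by (auto simp: bx_def okbox_def)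
  have area_bx: "area (bx ji) = 12 * e * hq" for ji
    by (cases ji) (simp add: bx_def area_def algebra_simps)
  have "sum area (bx ` I) \<le> sum (area \<circ> bx) I"
    using finI ok by (intro sum_image_le) (auto intro: area_nonneg)
  also have "\<dots> = real (card I) * (12 * e * hq)" using area_bx by simp
  also have "real (card I) = (2 * real Mp + 1) * real Mp" unfolding I_def by (simp add: card_cartesian_product algebra_simps)
  also have "(2 * real Mp + 1) * real Mp * (12 * e * hq) = 72 * W^2 * (2 * real Mp + 1) / real Mp"
    unfolding e_def hq_def using Mp0 by (simp add: field_simps power2_eq_square)
  also have "\<dots> \<le> 72 * W^2 * 3"
  proof -
    have "(2 * real Mp + 1) / real Mp \<le> 3" using Mp0 by (simp add: divide_le_eq)
    then have "72 * W^2 * ((2 * real Mp + 1) / real Mp) \<le> 72 * W^2 * 3" using W0 by (intro mult_left_mono) auto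
    then show ?thesis by simp
  qed
  also have "\<dots> < 1000 * w^2" unfolding W_def using w by (simp add: power2_eq_square)
  finally have "sum area (bx ` I) < 1000 * w^2" .
  then have "boxcov (KB h \<inter> strip (t0-w) (t0+w)) (1000*w^2)"
    unfolding boxcov_def using finI ok cov by (intro exI[of _ "bx ` I"]) auto
  then show ?thesis using hSL close by blast
qed


lemma boxcov_UN_atMost:
  assumes "\<And>k. k \<le> m \<Longrightarrow> boxcov (S k) c"
  shows "boxcov (\<Union>k\<le>m. S k) (real (Suc m) * c)"
  using assms
proof (induction m)
  case 0 then show ?case by simp
next
  case (Suc m)
  have "boxcov ((\<Union>k\<le>m. S k) \<union> S (Suc m)) (real (Suc m) * c + c)"
    using Suc by (intro boxcov_Un) auto
  moreover have "(\<Union>k\<le>Suc m. S k) = (\<Union>k\<le>m. S k) \<union> S (Suc m)" by (auto simp: atMost_Suc)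
  ultimately show ?case by (simp add: algebra_simps)
qed

lemma zero_SL: "(\<lambda>_. 0) \<in> SL"
  unfolding SL_def mem_Collect_eq
  by (rule exI[of _ 1], rule exI[of _ "\<lambda>_. 0"], rule exI[of _ "\<lambda>_. 0"]) simp

lemma besicovitch_planar: "\<exists>a. (\<forall>v\<in>{-1..1}. \<bar>a v\<bar> \<le> 1) \<and> (\<forall>e>0. boxcov (KB a) e)"
proof -
  define t0 where "t0 n = (real (min (snd (prod_decode n)) (fst (prod_decode n))) + 1/2) / (real (fst (prod_decode n)) + 1)" for n
  define w where "w n = 1 / (2 * (real (fst (prod_decode n)) + 1))" for n
  have w0: "w n > 0" for n unfolding w_def by simp
  have t0r: "0 \<le> t0 n \<and> t0 n \<le> 1" for n
  proof -
    let ?m = "fst (prod_decode n)" and ?k = "snd (prod_decode n)"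
    have "real (min ?k ?m) + 1/2 \<le> real ?m + 1" by simp
    then show ?thesis unfolding t0_def by (simp add: divide_le_eq)
  qed
  define P where "P n g \<eta> r \<longleftrightarrow> fst r \<in> SL \<and> 0 < snd r \<and> snd r \<le> \<eta>/2 \<and>
      (\<forall>v\<in>{-1..1}. \<bar>fst r v - g v\<bar> \<le> \<eta>/2) \<and>
      (\<forall>b. (\<forall>v\<in>{-1..1}. \<bar>b v - fst r v\<bar> \<le> snd r) \<longrightarrow>
         boxcov (KB b \<inter> strip (t0 n - w n) (t0 n + w n)) (1000 * (w n)^2))" for n g \<eta> r
  have ex: "\<exists>r. P n g \<eta> r" if gSL: "g \<in> SL" and eta: "\<eta> > 0" for n g \<eta>
  proof -
    obtain h where h: "h \<in> SL" "\<forall>v\<in>{-1..1}. \<bar>h v - g v\<bar> \<le> \<eta>/2"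
      "boxcov (KB h \<inter> strip (t0 n - w n) (t0 n + w n)) (1000 * (w n)^2)"
      using density[OF gSL, of "\<eta>/2" "t0 n" "w n"] eta t0r w0 by auto
    obtain A where A: "\<forall>v\<in>{-1..1}. \<bar>h v\<bar> \<le> A" using SL_bounded[OF h(1)] by blast
    obtain \<eta>1 where \<eta>1: "\<eta>1 > 0" "\<forall>b. (\<forall>v\<in>{-1..1}. \<bar>b v - h v\<bar> \<le> \<eta>1) \<longrightarrow>
         boxcov (KB b \<inter> strip (t0 n - w n) (t0 n + w n)) (1000 * (w n)^2)"
      using boxcov_open[OF A h(3)] by blast
    show ?thesis
      unfolding P_def using h \<eta>1 eta
      by (intro exI[of _ "(h, min \<eta>1 (\<eta>/2))"]) auto
  qed
  have "\<forall>x. \<exists>r. (fst (snd x) \<in> SL \<and> snd (snd x) > 0 \<longrightarrow> P (fst x) (fst (snd x)) (snd (snd x)) r)"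
    using ex by blast
  then obtain stp where stp: "\<And>x. fst (snd x) \<in> SL \<Longrightarrow> snd (snd x) > 0 \<Longrightarrow> P (fst x) (fst (snd x)) (snd (snd x)) (stp x)"
    by metis
  define sq where "sq = rec_nat ((\<lambda>_::real. 0::real), 1::real) (\<lambda>n p. stp (n, fst p, snd p))"
  have sq0: "sq 0 = ((\<lambda>_. 0), 1)" unfolding sq_def by simp
  have sqS: "sq (Suc n) = stp (n, fst (sq n), snd (sq n))" for n unfolding sq_def by simp
  define gs where "gs n = fst (sq n)" for n
  define es where "es n = snd (sq n)" for n
  have inv: "gs n \<in> SL \<and> es n > 0" for n
  proof (induction n)
    case 0 then show ?case by (simp add: gs_def es_def sq0 zero_SL)
  next
    case (Suc n)
    have "P n (gs n) (es n) (sq (Suc n))" unfolding sqS gs_def es_def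
      using stp[of "(n, fst (sq n), snd (sq n))"] Suc by (simp add: gs_def es_def)
    then show ?case unfolding P_def gs_def es_def by simp
  qed
  have Pn: "P n (gs n) (es n) (gs (Suc n), es (Suc n))" for n
  proof -
    have "P n (gs n) (es n) (sq (Suc n))" unfolding sqS gs_def es_def
      using stp[of "(n, fst (sq n), snd (sq n))"] inv[of n] by (simp add: gs_def es_def)
    then show ?thesis by (simp add: gs_def es_def)
  qed
  have es_half: "es (Suc n) \<le> es n / 2" for n using Pn[of n] unfolding P_def by simp
  have gs_step: "\<bar>gs (Suc n) v - gs n v\<bar> \<le> es n / 2" if "v \<in> {-1..1}" for n v
    using Pn[of n] that unfolding P_def by simp
  have es_pow: "es n \<le> (1/2)^n" for n
  proof (induction n)
    case 0 then show ?case by (simp add: es_def sq0)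
  next
    case (Suc n) then show ?case using es_half[of n] by simp
  qed
  have gs_diff: "\<bar>gs k v - gs n v\<bar> \<le> es n - es k" if "n \<le> k" "v \<in> {-1..1}" for n k v
    using that(1)
  proof (induction k rule: dec_induct)
    case base then show ?case by simp
  next
    case (step k)
    have "\<bar>gs (Suc k) v - gs n v\<bar> \<le> \<bar>gs (Suc k) v - gs k v\<bar> + \<bar>gs k v - gs n v\<bar>" by linarith
    also have "\<dots> \<le> es k / 2 + (es n - es k)" using gs_step[OF that(2), of k] step.IH by linarith
    also have "\<dots> \<le> es n - es (Suc k)" using es_half[of k] by linarith
    finally show ?case .
  qed
  have conv: "convergent (\<lambda>n. gs n v)" if v: "v \<in> {-1..1}" for v
  proof (rule real_Cauchy_convergent, rule CauchyI)
    fix e :: real assume e: "0 < e"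
    obtain M where M: "(1/2::real)^M < e/2" using real_arch_pow_inv[of "e/2" "1/2"] e by auto
    show "\<exists>M. \<forall>m\<ge>M. \<forall>n\<ge>M. norm (gs m v - gs n v) < e"
    proof (intro exI[of _ M] allI impI)
      fix m n assume mn: "M \<le> m" "M \<le> n"
      have "\<bar>gs m v - gs M v\<bar> \<le> es M" using gs_diff[OF mn(1) v] inv[of m] by linarith
      moreover have "\<bar>gs n v - gs M v\<bar> \<le> es M" using gs_diff[OF mn(2) v] inv[of n] by linarith
      ultimately have "\<bar>gs m v - gs n v\<bar> \<le> 2 * es M" by linarith
      also have "\<dots> < e" using es_pow[of M] M by linarith
      finally show "norm (gs m v - gs n v) < e" by simp
    qed
  qed
  define a where "a v = lim (\<lambda>n. gs n v)" for v
  have lim: "(\<lambda>n. gs n v) \<longlonglongrightarrow> a v" if "v \<in> {-1..1}" for v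
    using conv[OF that] unfolding a_def by (simp add: convergent_LIMSEQ_iff)
  have a_close: "\<bar>a v - gs n v\<bar> \<le> es n" if v: "v \<in> {-1..1}" for n v
  proof (rule LIMSEQ_le_const2)
    show "(\<lambda>k. \<bar>gs k v - gs n v\<bar>) \<longlonglongrightarrow> \<bar>a v - gs n v\<bar>"
      by (intro tendsto_rabs tendsto_diff lim[OF v] tendsto_const)
    show "\<exists>N. \<forall>k\<ge>N. \<bar>gs k v - gs n v\<bar> \<le> es n"
      using gs_diff[OF _ v] inv by (intro exI[of _ n]) (smt (verit))
  qed
  have bnd: "\<forall>v\<in>{-1..1}. \<bar>a v\<bar> \<le> 1"
  proof
    fix v :: real assume v: "v \<in> {-1..1}"
    have "gs 0 v = 0" "es 0 = 1" by (simp_all add: gs_def es_def sq0)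
    then show "\<bar>a v\<bar> \<le> 1" using a_close[OF v, of 0] by simp
  qed
  have stage: "boxcov (KB a \<inter> strip (t0 n - w n) (t0 n + w n)) (1000 * (w n)^2)" for n
  proof -
    have "\<forall>v\<in>{-1..1}. \<bar>a v - gs (Suc n) v\<bar> \<le> es (Suc n)" using a_close by blast
    then show ?thesis using Pn[of n] unfolding P_def by simp
  qed
  have "boxcov (KB a) e" if e: "e > 0" for e
  proof -
    obtain m :: nat where m: "250 / e < real m" using reals_Archimedean2 by blast
    have m1: "250 / (real m + 1) < e"
    proof -
      have "250 < e * (real m + 1)" using m e by (simp add: divide_less_eq mult.commute) (smt (verit, ccfv_SIG) mult_left_mono)
      then show ?thesis using e by (simp add: divide_less_eq mult.commute)
    qed
    define S where "S k = KB a \<inter> strip (real k / (real m + 1)) ((real k + 1) / (real m + 1))" for k :: nat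
    have Sk: "boxcov (S k) (250 / (real m + 1)^2)" if "k \<le> m" for k
    proof -
      let ?n = "prod_encode (m, k)"
      have d: "prod_decode ?n = (m, k)" by (simp add: prod_encode_inverse)
      have e1: "1/(2*(real m+1)) = (1/2)/(real m+1)" by simp
      have "t0 ?n - w ?n = ((real k + 1/2) - 1/2) / (real m + 1)"
        using that unfolding t0_def w_def d e1 by (simp only: diff_divide_distrib) simp
      moreover have "t0 ?n + w ?n = ((real k + 1/2) + 1/2) / (real m + 1)"
        using that unfolding t0_def w_def d e1 by (simp only: add_divide_distrib) simp
      ultimately have "t0 ?n - w ?n = real k / (real m + 1)" "t0 ?n + w ?n = (real k + 1) / (real m + 1)"
        by simp_all
      moreover have "1000 * (w ?n)^2 = 250 / (real m + 1)^2"
      proof -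
        have aux: "x > 0 \<Longrightarrow> 1000 * (1/(2*x))^2 = 250/x^2" for x :: real
          by (simp add: field_simps power2_eq_square)
        show ?thesis unfolding w_def d fst_conv by (rule aux) simp
      qed
      ultimately show ?thesis using stage[of ?n] unfolding S_def by simp
    qed
    have cov: "KB a \<subseteq> (\<Union>k\<le>m. S k)"
    proof
      fix z assume z: "z \<in> KB a"
      let ?s = "snd z"
      have s: "0 \<le> ?s" "?s \<le> 1" using KB_strip z by (auto simp: strip_def)
      define k where "k = min m (nat \<lfloor>?s * (real m + 1)\<rfloor>)"
      have f0: "0 \<le> \<lfloor>?s * (real m + 1)\<rfloor>" using s by simp
      have "real (nat \<lfloor>?s * (real m + 1)\<rfloor>) \<le> ?s * (real m + 1)"
        using f0 by (simp add: of_nat_nat)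
      moreover have "k \<le> nat \<lfloor>?s * (real m + 1)\<rfloor>" unfolding k_def by simp
      ultimately have "real k \<le> ?s * (real m + 1)" by linarith
      moreover have "?s * (real m + 1) \<le> real k + 1"
      proof (cases "nat \<lfloor>?s * (real m + 1)\<rfloor> \<le> m")
        case True then show ?thesis unfolding k_def using s by (simp add: min_def)
      next
        case False
        then have "k = m" unfolding k_def by simp
        then show ?thesis using s by (simp add: mult_left_le)
      qed
      ultimately have "z \<in> S k" using z unfolding S_def strip_def
        by (simp add: divide_le_eq le_divide_eq mult.commute)
      moreover have "k \<le> m" unfolding k_def by simp
      ultimately show "z \<in> (\<Union>k\<le>m. S k)" by blast
    qed
    have "boxcov (\<Union>k\<le>m. S k) (real (Suc m) * (250 / (real m + 1)^2))"
      by (rule boxcov_UN_atMost) (rule Sk)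
    moreover have "real (Suc m) * (250 / (real m + 1)^2) = 250 / (real m + 1)"
    proof -
      have aux: "x > 0 \<Longrightarrow> x * (250 / x^2) = 250 / x" for x :: real
        by (simp add: field_simps power2_eq_square)
      show ?thesis using aux[of "real m + 1"] by (simp add: add.commute)
    qed
    ultimately show ?thesis using cov m1 by (auto intro: boxcov_mono)
  qed
  then show ?thesis using bnd by blast
qed


definition Qset :: "(real \<times> real) set" where
  "Qset = {(\<alpha> + t * \<beta>, t) | \<alpha> \<beta> t. \<alpha> \<in> Cset \<and> \<beta> \<in> Cset \<and> t \<in> {0..1}}"

lemma boxcov_Qlevel:
  fixes N :: nat
  shows "boxcov Qset (16 * real (card (cD N))^2 * 2^N * ((1/2)^N)^2)"
proof -
  define h :: real where "h = (1/2)^N"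
  have h0: "h > 0" unfolding h_def by simp
  have h2: "h * 2^N = 1" unfolding h_def by (simp add: power_one_over[symmetric] power_mult_distrib[symmetric])
  define bx where "bx x = (case x of (p, q, i) \<Rightarrow>
      (p + real i * h * q - h, p + real i * h * q + 4*h, real i * h - h, (real i + 1) * h + h))" for x :: "real \<times> real \<times> nat"
  define I where "I = cD N \<times> cD N \<times> {..<(2::nat)^N}"
  have finI: "finite I" unfolding I_def using finite_cD by simp
  have cover: "Qset \<subseteq> (\<Union>r\<in>bx ` I. obox r)"
  proof
    fix z assume "z \<in> Qset"
    then obtain \<alpha> \<beta> t where z: "z = (\<alpha> + t * \<beta>, t)" "\<alpha> \<in> Cset" "\<beta> \<in> Cset" "t \<in> {0..1}"
      unfolding Qset_def by blast
    obtain p where p: "p \<in> cD N" "p \<le> \<alpha>" "\<alpha> \<le> p + h" using Cset_approx[OF z(2), of N] h_def by auto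
    obtain q where q: "q \<in> cD N" "q \<le> \<beta>" "\<beta> \<le> q + h" using Cset_approx[OF z(3), of N] h_def by auto
    have q1: "0 \<le> q" "q \<le> 1" using cD_range[OF q(1)] h0 unfolding h_def by (auto, smt (verit) zero_le_power)
    define i where "i = min (2^N - 1) (nat \<lfloor>t * 2^N\<rfloor>)"
    have iN: "i < 2^N"
    proof -
      have "i \<le> 2^N - 1" unfolding i_def by simp
      moreover have "(0::nat) < 2^N" by simp
      ultimately show ?thesis by linarith
    qed
    have ti: "real i * h \<le> t \<and> t \<le> (real i + 1) * h"
    proof (cases "nat \<lfloor>t * 2^N\<rfloor> \<le> 2^N - 1")
      case True
      then have i: "i = nat \<lfloor>t * 2^N\<rfloor>" unfolding i_def by simp
      have f0: "0 \<le> \<lfloor>t * 2^N\<rfloor>" using z(4) by simp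
      have a: "real i \<le> t * 2^N" "t * 2^N < real i + 1" unfolding i using f0 by (simp_all add: of_nat_nat)
      have "real i * h \<le> t * 2^N * h" using a(1) h0 by (simp add: mult_right_mono)
      moreover have "t * 2^N * h < (real i + 1) * h" using a(2) h0 by (simp add: mult_strict_right_mono)
      moreover have "t * 2^N * h = t" using h2 by (simp add: mult.assoc mult.commute)
      ultimately show ?thesis by simp
    next
      case False
      have "(0::nat) < 2^N" by simp
      then have g: "2^N \<le> nat \<lfloor>t * 2^N\<rfloor>" using False by linarith
      have f0: "0 \<le> \<lfloor>t * 2^N\<rfloor>" using z(4) by simp
      have "real (2^N) \<le> real (nat \<lfloor>t * 2^N\<rfloor>)" using g by (simp only: of_nat_le_iff)
      also have "\<dots> \<le> t * 2^N" using f0 by (simp add: of_nat_nat)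
      finally have "t * 2^N \<ge> 2^N" by simp
      then have t1: "t = 1" using z(4) by simp
      have i: "i = 2^N - 1" unfolding i_def using False by simp
      have ri: "real i = 2^N - 1" unfolding i by (simp add: of_nat_diff)
      have "real i * h = (2^N - 1) * h" by (simp only: ri)
      also have "\<dots> = 2^N * h - h" by (simp add: algebra_simps)
      finally have "real i * h = 2^N * h - h" .
      moreover have "2^N * h = 1" using h2 by (simp add: mult.commute)
      ultimately have A: "real i * h = 1 - h" by simp
      then have B: "(real i + 1) * h = 1" by (simp add: algebra_simps)
      show ?thesis using A B t1 h0 by simp
    qed
    define x0 where "x0 = p + real i * h * q"
    have "\<alpha> + t * \<beta> - x0 = (\<alpha> - p) + t * (\<beta> - q) + (t - real i * h) * q"
      unfolding x0_def by (simp add: algebra_simps)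
    moreover have "0 \<le> t * (\<beta> - q)" using z(4) q by simp
    moreover have "t * (\<beta> - q) \<le> 1 * h" using z(4) q h0 by (intro mult_mono) auto
    moreover note this
    moreover have "0 \<le> (t - real i * h) * q" "(t - real i * h) * q \<le> h"
    proof -
      show "0 \<le> (t - real i * h) * q" using ti q1 by simp
      have "(t - real i * h) * q \<le> h * 1" using ti q1 h0 by (intro mult_mono) (auto simp: algebra_simps)
      then show "(t - real i * h) * q \<le> h" by simp
    qed
    ultimately have "x0 \<le> \<alpha> + t * \<beta>" "\<alpha> + t * \<beta> \<le> x0 + 3*h" using p by linarith+
    then have "z \<in> obox (bx (p, q, i))" using z(1) ti h0
      unfolding bx_def obox_def x0_def by auto
    moreover have "(p, q, i) \<in> I" unfolding I_def using p q iN by simp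
    ultimately show "z \<in> (\<Union>r\<in>bx ` I. obox r)" by blast
  qed
  have ok: "\<forall>r\<in>bx ` I. okbox r" using h0 by (auto simp: bx_def okbox_def algebra_simps)
  have area_bx: "area (bx x) = 15 * h^2" for x
    by (cases x) (simp add: bx_def area_def algebra_simps power2_eq_square)
  have "sum area (bx ` I) \<le> sum (area \<circ> bx) I"
    using finI ok by (intro sum_image_le) (auto intro: area_nonneg)
  also have "\<dots> = real (card I) * (15 * h^2)" using area_bx by simp
  also have "real (card I) = real (card (cD N))^2 * 2^N"
    unfolding I_def by (simp add: card_cartesian_product power2_eq_square)
  finally have s: "sum area (bx ` I) \<le> real (card (cD N))^2 * 2^N * (15 * h^2)" .
  have "real (card (cD N))^2 * 2^N * (15 * h^2) < 16 * real (card (cD N))^2 * 2^N * h^2"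
  proof -
    have "card (cD N) > 0" using finite_cD cD_mono[of 0 N] by (auto simp: card_gt_0_iff)
    then have "0 < real (card (cD N))^2 * 2^N * h^2" using h0 by simp
    then show ?thesis by (simp add: algebra_simps)
  qed
  then have "sum area (bx ` I) < 16 * real (card (cD N))^2 * 2^N * ((1/2)^N)^2"
    using s unfolding h_def by linarith
  then show ?thesis unfolding boxcov_def using finI ok cover by blast
qed

lemma boxcov_Qset: "e > 0 \<Longrightarrow> boxcov Qset e"
proof -
  assume e: "e > 0"
  obtain n where n: "(1/2::real)^n < e/16" using real_arch_pow_inv[of "e/16" "1/2"] e by auto
  define N :: nat where "N = 36^(Suc n)"
  have c: "card (cD N) \<le> 2^(6*36^n)"
  proof -
    have "(2::nat)^ccount N \<le> 2^(6*36^n)" unfolding N_def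
      using ccount_sparse[of n] by (intro power_increasing) auto
    then show ?thesis using card_cD[of N] by linarith
  qed
  have "16 * real (card (cD N))^2 * 2^N * ((1/2)^N)^2 \<le> 16 * (2^(6*36^n))^2 * 2^N * ((1/2)^N)^2"
  proof -
    have "real (card (cD N)) \<le> 2^(6*36^n)" using c by (metis of_nat_le_iff of_nat_numeral of_nat_power)
    then have "real (card (cD N))^2 \<le> (2^(6*36^n))^2" by (intro power_mono) auto
    then show ?thesis by (intro mult_right_mono mult_left_mono) auto
  qed
  also have "16 * (2^(6*36^n))^2 * 2^N * ((1/2)^N)^2 = 16 * (1/2::real)^(24*36^n)"
  proof -
    have N: "N = 12*36^n + 24*36^n" unfolding N_def by simp
    have "((2::real)^(6*36^n)) ^ 2 = 2^(12*36^n)"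
      by (simp only: power_mult[symmetric]) (simp add: mult.commute)
    moreover have "((1/2::real)^N)^2 = (1/2)^N * (1/2)^N" by (simp add: power2_eq_square)
    moreover have "(2::real)^N * (1/2)^N = 1" by (simp add: power_mult_distrib[symmetric])
    moreover have "(2::real)^(12*36^n) * (1/2)^N = (1/2)^(24*36^n)"
      unfolding N power_add by (simp add: mult.assoc[symmetric] power_mult_distrib[symmetric])
    ultimately show ?thesis by (simp add: algebra_simps)
  qed
  also have "\<dots> \<le> 16 * (1/2::real)^n"
  proof -
    have "n < 2^n" by (rule less_exp)
    moreover have "(2::nat)^n \<le> 36^n" by (intro power_mono) auto
    ultimately have "n \<le> 36^n" by linarith
    then have "n \<le> 24*36^n" by linarith
    then have "(1/2::real)^(24*36^n) \<le> (1/2)^n" by (intro power_decreasing) auto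
    then show ?thesis by simp
  qed
  also have "\<dots> < e" using n by simp
  finally have lt: "16 * real (card (cD N))^2 * 2^N * ((1/2)^N)^2 < e" .
  show ?thesis by (rule boxcov_mono[OF boxcov_Qlevel[of N]]) (use lt in auto)
qed


definition lift :: "(real \<times> real) set \<Rightarrow> real \<Rightarrow> 'm \<Rightarrow> ((real^'m::finite) \<times> real) set" where
  "lift P L i0 = {z. (fst z $ i0, snd z) \<in> P \<and> (\<forall>j. j \<noteq> i0 \<longrightarrow> \<bar>fst z $ j\<bar> \<le> L)}"

definition liftbox :: "real \<Rightarrow> 'm \<Rightarrow> real \<times> real \<times> real \<times> real \<Rightarrow> ((real^'m::finite) \<times> real) set" where
  "liftbox L i0 r = (case r of (a,b,c,d) \<Rightarrow>
     cbox ((\<chi> j. if j = i0 then a else -L), c) ((\<chi> j. if j = i0 then b else L), d))"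

lemma emeasure_liftbox:
  fixes i0 :: "'m::finite"
  assumes "okbox r" "L \<ge> 0"
  shows "emeasure lborel (liftbox L i0 r) = ennreal (area r * (2*L)^(CARD('m) - 1))"
proof -
  obtain a b c d where r: "r = (a,b,c,d)" by (cases r) auto
  have ab: "a \<le> b" "c \<le> d" using assms(1) r by (auto simp: okbox_def)
  define lo :: "real^'m" where "lo = (\<chi> j. if j = i0 then a else -L)"
  define hi :: "real^'m" where "hi = (\<chi> j. if j = i0 then b else L)"
  have lohi: "lo $ i \<le> hi $ i" for i using ab assms(2) by (simp add: lo_def hi_def)
  have "lo \<in> cbox lo hi" using lohi by (simp add: mem_box_cart(2))
  then have ne: "cbox lo hi \<noteq> {}" by blast
  have "emeasure lborel (liftbox L i0 r) = emeasure lborel (cbox (lo, c) (hi, d))"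
    unfolding liftbox_def r lo_def hi_def by simp
  also have "\<dots> = ennreal (measure lborel (cbox (lo, c) (hi, d)))"
    by (rule emeasure_eq_ennreal_measure) (use emeasure_lborel_cbox_finite[of "(lo,c)" "(hi,d)"] in simp)
  also have "measure lborel (cbox (lo, c) (hi, d)) = measure lborel (cbox lo hi) * measure lborel (cbox c d)"
    by (rule content_Pair)
  also have "measure lborel (cbox c d) = d - c" using ab by (simp add: content_real)
  also have "measure lborel (cbox lo hi) = (\<Prod>i\<in>UNIV. hi$i - lo$i)" by (rule content_cbox_cart[OF ne])
  also have "(\<Prod>i\<in>UNIV. hi$i - lo$i) = (b - a) * (\<Prod>i\<in>UNIV - {i0}. hi$i - lo$i)"
  proof -
    have "(\<Prod>i\<in>UNIV. hi$i - lo$i) = (hi$i0 - lo$i0) * (\<Prod>i\<in>UNIV - {i0}. hi$i - lo$i)"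
      by (rule prod.remove) auto
    then show ?thesis by (simp add: lo_def hi_def)
  qed
  also have "(\<Prod>i\<in>UNIV - {i0}. hi$i - lo$i) = (\<Prod>i\<in>UNIV - {i0}. 2*L)"
    by (rule prod.cong) (auto simp: lo_def hi_def)
  also have "\<dots> = (2*L)^(CARD('m) - 1)" by (simp add: card_Diff_singleton)
  finally show ?thesis unfolding r area_def by (simp add: algebra_simps)
qed

lemma null_lift:
  fixes i0 :: "'m::finite" and S :: "((real^'m) \<times> real) set"
  assumes P: "\<forall>e>0. boxcov P e" and L: "L \<ge> 0" and S: "S \<subseteq> lift P L i0"
  shows "emeasure lborel S = 0"
proof -
  define K where "K = (2*L)^(CARD('m) - 1)"
  have K0: "K \<ge> 0" unfolding K_def using L by simp
  have "emeasure lborel S \<le> 0"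
  proof (rule ennreal_le_epsilon)
    fix \<epsilon> :: real assume \<epsilon>: "0 < \<epsilon>"
    have pos: "\<epsilon> / (K+1) > 0" using \<epsilon> K0 by simp
    obtain F where F: "finite F" "\<forall>r\<in>F. okbox r" "P \<subseteq> (\<Union>r\<in>F. obox r)" "sum area F < \<epsilon> / (K+1)"
      using P[rule_format, OF pos] unfolding boxcov_def by blast
    have cov: "S \<subseteq> (\<Union>r\<in>F. liftbox L i0 r)"
    proof
      fix z assume "z \<in> S"
      then have z: "(fst z $ i0, snd z) \<in> P" "\<And>j. j \<noteq> i0 \<Longrightarrow> \<bar>fst z $ j\<bar> \<le> L"
        using S unfolding lift_def by auto
      then obtain r where r: "r \<in> F" "(fst z $ i0, snd z) \<in> obox r" using F(3) by auto
      obtain a b c d where rr: "r = (a,b,c,d)" by (cases r) auto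
      obtain x t where zx: "z = (x,t)" by (cases z)
      have ro: "a < x $ i0" "x $ i0 < b" "c < t" "t < d" using r(2) unfolding rr obox_def zx by auto
      have "x \<in> cbox (\<chi> j. if j = i0 then a else -L) (\<chi> j. if j = i0 then b else L)"
        unfolding mem_box_cart(2)
      proof (intro allI)
        fix j show "(\<chi> j. if j = i0 then a else -L) $ j \<le> x $ j \<and> x $ j \<le> (\<chi> j. if j = i0 then b else L) $ j"
          using ro z(2)[of j] zx by (cases "j = i0") (auto simp: abs_le_iff)
      qed
      moreover have "t \<in> cbox c d" using ro by simp
      ultimately have "z \<in> liftbox L i0 r" unfolding rr liftbox_def zx cbox_Pair_eq by simp
      then show "z \<in> (\<Union>r\<in>F. liftbox L i0 r)" using r by blast
    qed
    have meas: "liftbox L i0 r \<in> sets lborel" for r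
      by (cases r) (simp add: liftbox_def)
    have "emeasure lborel S \<le> emeasure lborel (\<Union>r\<in>F. liftbox L i0 r)"
      using cov meas F(1) by (intro emeasure_mono) auto
    also have "\<dots> \<le> (\<Sum>r\<in>F. emeasure lborel (liftbox L i0 r))"
      using meas F(1) by (intro emeasure_subadditive_finite) auto
    also have "\<dots> = (\<Sum>r\<in>F. ennreal (area r * K))"
      using F(2) L unfolding K_def by (intro sum.cong refl emeasure_liftbox) auto
    also have "\<dots> = ennreal (\<Sum>r\<in>F. area r * K)"
      using F(2) K0 by (intro sum_ennreal) (auto intro: mult_nonneg_nonneg area_nonneg)
    finally have A: "emeasure lborel S \<le> ennreal (\<Sum>r\<in>F. area r * K)" .
    have "(\<Sum>r\<in>F. area r * K) = sum area F * K" by (simp add: sum_distrib_right)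
    also have "sum area F * K \<le> \<epsilon> / (K+1) * K" using F(4) K0 by (intro mult_right_mono) auto
    also have "\<dots> \<le> \<epsilon>"
    proof -
      have "\<epsilon> / (K+1) * K = \<epsilon> * (K / (K+1))" by simp
      also have "\<dots> \<le> \<epsilon> * 1" using \<epsilon> K0 by (intro mult_left_mono) auto
      finally show ?thesis by simp
    qed
    finally have B: "(\<Sum>r\<in>F. area r * K) \<le> \<epsilon>" .
    show "emeasure lborel S \<le> 0 + ennreal \<epsilon>" using A ennreal_leI[OF B] by simp
  qed
  then show ?thesis by simp
qed



lemma genK_memI: "v \<in> {-1..1} \<Longrightarrow> t \<in> {0..1} \<Longrightarrow> x = a v + t * v \<Longrightarrow> (x, t) \<in> genK a"
  unfolding genK_def by blast

lemma seg_genK: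
  assumes "\<bar>w1\<bar> \<le> \<bar>w2\<bar>" "\<bar>w2\<bar> \<le> 1"
  shows "\<exists>p1 p2. \<forall>s\<in>{0..1}. (p1 + s*w1, p2 + s*w2) \<in> genK a"
proof (cases "w2 = 0")
  case True
  then have "w1 = 0" using assms by simp
  then show ?thesis using True
    by (intro exI[of _ "a 0"] exI[of _ 0] ballI genK_memI) auto
next
  case False
  define v where "v = w1 / w2"
  have v1: "v \<in> {-1..1}" unfolding v_def using assms False by (auto simp: abs_le_iff divide_le_eq le_divide_eq)
  have vw: "w2 * v = w1" unfolding v_def using False by simp
  show ?thesis
  proof (cases "w2 > 0")
    case True
    have "(a v + s * w1, 0 + s * w2) \<in> genK a" if s: "s \<in> {0..1}" for s
    proof (rule genK_memI[OF v1])
      show "0 + s * w2 \<in> {0..1}" using s True assms(2) by (auto intro: mult_le_one)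
      show "a v + s * w1 = a v + (0 + s * w2) * v" using vw by (simp add: algebra_simps)
    qed
    then show ?thesis by blast
  next
    case f2: False
    then have neg: "w2 < 0" using False by simp
    have "(a v + v + s * w1, 1 + s * w2) \<in> genK a" if s: "s \<in> {0..1}" for s
    proof (rule genK_memI[OF v1])
      have "s * (-w2) \<le> 1 * 1" using s neg assms(2) by (intro mult_mono) auto
      moreover have "0 \<le> s * (-w2)" using s neg by (intro mult_nonneg_nonneg) auto
      ultimately show "1 + s * w2 \<in> {0..1}" by auto
      show "a v + v + s * w1 = a v + (1 + s * w2) * v" using vw by (simp add: algebra_simps)
    qed
    then show ?thesis by blast
  qed
qed

lemma seg_P:
  assumes "\<bar>w1\<bar> \<le> 1" "\<bar>w2\<bar> \<le> 1"
  shows "\<exists>p1 p2. \<forall>s\<in>{0..1}. (p1 + s*w1, p2 + s*w2) \<in> KB a \<union> prod.swap ` KB a"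
proof (cases "\<bar>w1\<bar> \<le> \<bar>w2\<bar>")
  case True
  then obtain p1 p2 where "\<forall>s\<in>{0..1}. (p1 + s*w1, p2 + s*w2) \<in> genK a"
    using seg_genK[OF True assms(2)] by blast
  then show ?thesis unfolding KB_def using closure_subset by blast
next
  case False
  then obtain q1 q2 where q: "\<forall>s\<in>{0..1}. (q1 + s*w2, q2 + s*w1) \<in> genK a"
    using seg_genK[of w2 w1 a] assms(1) by auto
  have "(q2 + s*w1, q1 + s*w2) \<in> prod.swap ` KB a" if "s \<in> {0..1}" for s
  proof -
    have "(q1 + s*w2, q2 + s*w1) \<in> KB a" using q that closure_subset unfolding KB_def by blast
    then show ?thesis by (auto simp: image_iff intro!: bexI[of _ "(q1 + s*w2, q2 + s*w1)"])
  qed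
  then show ?thesis by blast
qed

lemma compact_lift:
  fixes i0 :: "'m::finite"
  assumes P: "compact P" and L: "L \<ge> 0"
  shows "compact (lift P L i0)"
proof -
  have c1: "closed {z::(real^'m)\<times>real. (fst z $ i0, snd z) \<in> P}"
  proof -
    have "{z::(real^'m)\<times>real. (fst z $ i0, snd z) \<in> P} = (\<lambda>z. (fst z $ i0, snd z)) -` P" by auto
    moreover have "continuous_on UNIV (\<lambda>z::(real^'m)\<times>real. (fst z $ i0, snd z))"
      by (intro continuous_intros)
    ultimately show ?thesis using closed_vimage[OF compact_imp_closed[OF P]] by simp
  qed
  have c2: "closed {z::(real^'m)\<times>real. \<forall>j. j \<noteq> i0 \<longrightarrow> \<bar>fst z $ j\<bar> \<le> L}"
  proof (intro closed_Collect_all closed_Collect_imp)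
    fix j show "open {z::(real^'m)\<times>real. j \<noteq> i0}" by (cases "j = i0") auto
    show "closed {z::(real^'m)\<times>real. \<bar>fst z $ j\<bar> \<le> L}"
      by (intro closed_Collect_le continuous_intros)
  qed
  have cl: "closed (lift P L i0)"
  proof -
    have "lift P L i0 = {z. (fst z $ i0, snd z) \<in> P} \<inter> {z. \<forall>j. j \<noteq> i0 \<longrightarrow> \<bar>fst z $ j\<bar> \<le> L}"
      unfolding lift_def by auto
    then show ?thesis using c1 c2 by auto
  qed
  obtain A where A: "P \<subseteq> cbox (-A) A" using bounded_subset_cbox_symmetric compact_imp_bounded[OF P] by metis
  obtain A1 A2 where A12: "A = (A1, A2)" by (cases A)
  define R where "R = max L A1"
  have "lift P L i0 \<subseteq> cbox (-(\<chi> j. R), -A2) ((\<chi> j. R), A2)"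
  proof
    fix z assume z: "z \<in> lift P L i0"
    obtain x t where zx: "z = (x, t)" by (cases z)
    have inP: "(x $ i0, t) \<in> cbox (-A1, -A2) (A1, A2)" using z A unfolding lift_def zx A12 by auto
    have "x \<in> cbox (-(\<chi> j. R)) (\<chi> j. R)"
      unfolding mem_box_cart(2)
    proof
      fix j show "(- (\<chi> j. R)) $ j \<le> x $ j \<and> x $ j \<le> (\<chi> j. R) $ j"
      proof (cases "j = i0")
        case True then show ?thesis using inP unfolding R_def by (auto simp: cbox_Pair_eq)
      next
        case False then show ?thesis using z unfolding lift_def zx R_def by (auto simp: abs_le_iff)
      qed
    qed
    moreover have "t \<in> cbox (-A2) A2" using inP by (simp add: cbox_Pair_eq)
    ultimately show "z \<in> cbox (-(\<chi> j. R), -A2) ((\<chi> j. R), A2)" unfolding zx cbox_Pair_eq by simp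
  qed
  then have "bounded (lift P L i0)" using bounded_cbox bounded_subset by blast
  then show ?thesis using cl by (simp add: compact_eq_bounded_closed)
qed

definition Vc :: "(real^'m::finite) set" where "Vc = {v. \<forall>j. v $ j \<in> Cset}"

lemma compact_Vc: "compact (Vc :: (real^'m::finite) set)"
proof -
  have "closed (Vc :: (real^'m) set)" unfolding Vc_def
  proof (intro closed_Collect_all)
    fix j :: 'm
    have "{v::real^'m. v $ j \<in> Cset} = (\<lambda>v. v $ j) -` Cset" by auto
    moreover have "continuous_on UNIV (\<lambda>v::real^'m. v $ j)" by (intro continuous_intros)
    ultimately show "closed {v::real^'m. v $ j \<in> Cset}"
      using closed_vimage[OF compact_imp_closed[OF compact_Cset]] by simp
  qed
  moreover have "(Vc :: (real^'m) set) \<subseteq> cbox 0 1"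
  proof
    fix v :: "real^'m" assume "v \<in> Vc"
    then have v: "\<forall>j. v $ j \<in> Cset" by (simp add: Vc_def)
    show "v \<in> cbox 0 1" unfolding mem_box_cart(2)
    proof
      fix i show "(0::real^'m) $ i \<le> v $ i \<and> v $ i \<le> (1::real^'m) $ i" using Cset_range[of "v$i"] v by simp
    qed
  qed
  then have "bounded (Vc :: (real^'m) set)" using bounded_cbox bounded_subset by blast
  ultimately show ?thesis by (simp add: compact_eq_bounded_closed)
qed

definition Kp :: "((real^'m::finite) \<times> real) set" where
  "Kp = {(av + t *\<^sub>R v, t) | v av t. v \<in> Vc \<and> av \<in> Vc \<and> t \<in> {0..1}}"

lemma compact_Kp: "compact (Kp :: ((real^'m::finite) \<times> real) set)"
proof -
  let ?f = "\<lambda>x::(real^'m) \<times> (real^'m) \<times> real. (fst (snd x) + snd (snd x) *\<^sub>R fst x, snd (snd x))"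
  have "Kp = ?f ` (Vc \<times> Vc \<times> {0..1})"
  proof
    show "Kp \<subseteq> ?f ` (Vc \<times> Vc \<times> {0..1})"
    proof
      fix z :: "(real^'m) \<times> real" assume "z \<in> Kp"
      then obtain v av t where z: "z = (av + t *\<^sub>R v, t)" "v \<in> Vc" "av \<in> Vc" "t \<in> {0..1}"
        unfolding Kp_def by blast
      show "z \<in> ?f ` (Vc \<times> Vc \<times> {0..1})" using z by (intro image_eqI[where x="(v,av,t)"]) auto
    qed
    show "?f ` (Vc \<times> Vc \<times> {0..1}) \<subseteq> Kp"
    proof
      fix z :: "(real^'m) \<times> real" assume "z \<in> ?f ` (Vc \<times> Vc \<times> {0..1})"
      then obtain v av t where "z = ?f (v, av, t)" "v \<in> Vc" "av \<in> Vc" "t \<in> {0..1}" by auto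
      then show "z \<in> Kp" unfolding Kp_def by auto
    qed
  qed
  moreover have cont: "continuous_on UNIV ?f" by (intro continuous_intros)
  moreover have cS: "compact ((Vc :: (real^'m) set) \<times> (Vc :: (real^'m) set) \<times> {0..1::real})"
    by (intro compact_Times compact_Vc compact_Icc)
  ultimately show ?thesis using compact_continuous_image[OF continuous_on_subset[OF cont subset_UNIV] cS] by simp
qed

definition Kset :: "(real \<Rightarrow> real) \<Rightarrow> ((real^'m::finite) \<times> real) set" where
  "Kset a = lift (KB a \<union> prod.swap ` KB a) 1 undefined \<union> Kp"

lemma compact_Kset:
  assumes "\<forall>v\<in>{-1..1}. \<bar>a v\<bar> \<le> A"
  shows "compact (Kset a :: ((real^'m::finite) \<times> real) set)"
proof -
  have "compact (KB a)" using compact_KB[OF assms] .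
  moreover have "continuous_on UNIV (prod.swap :: real \<times> real \<Rightarrow> real \<times> real)"
    by (simp add: continuous_on_swap)
  ultimately have "compact (prod.swap ` KB a)" using compact_continuous_image continuous_on_subset by blast
  then have "compact (KB a \<union> prod.swap ` KB a)" using \<open>compact (KB a)\<close> by (rule compact_Un[rotated])
  then show ?thesis unfolding Kset_def using compact_Kp compact_lift[of "KB a \<union> prod.swap ` KB a" 1 undefined] by (intro compact_Un) auto
qed

lemma kakeya_Kset:
  assumes "\<forall>v\<in>{-1..1}. \<bar>a v\<bar> \<le> A"
  shows "kakeya_set (Kset a :: ((real^'m::finite) \<times> real) set)"
  unfolding kakeya_set_def
proof (intro conjI compact_Kset[OF assms] allI impI)
  fix u :: "(real^'m) \<times> real" assume u: "norm u = 1"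
  obtain ux ut where uu: "u = (ux, ut)" by (cases u)
  let ?i0 = "undefined :: 'm"
  have nx: "norm ux \<le> 1" "\<bar>ut\<bar> \<le> 1"
    using u uu norm_fst_le[of ux ut] norm_snd_le[of ut ux] by auto
  have c0: "\<bar>ux $ ?i0\<bar> \<le> 1" using component_le_norm_cart[of ux ?i0] nx by linarith
  obtain p1 p2 where p: "\<forall>s\<in>{0..1}. (p1 + s * ux $ ?i0, p2 + s * ut) \<in> KB a \<union> prod.swap ` KB a"
    using seg_P[OF c0 nx(2)] by blast
  define x0 :: "real^'m" where "x0 = (\<chi> j. if j = ?i0 then p1 else 0)"
  show "\<exists>x. closed_segment x (x + u) \<subseteq> Kset a"
  proof (intro exI[of _ "(x0, p2)"] subsetI)
    fix y assume "y \<in> closed_segment (x0, p2) ((x0, p2) + u)"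
    then obtain s where s: "s \<in> {0..1}" "y = (x0, p2) + s *\<^sub>R u"
      unfolding closed_segment_def by (auto simp: algebra_simps)
    have y: "y = (x0 + s *\<^sub>R ux, p2 + s * ut)" using s uu by simp
    have "y \<in> lift (KB a \<union> prod.swap ` KB a) 1 ?i0"
      unfolding lift_def
    proof (intro CollectI conjI allI impI)
      show "(fst y $ ?i0, snd y) \<in> KB a \<union> prod.swap ` KB a"
        using p s(1) unfolding y x0_def by simp
      fix j :: 'm assume j: "j \<noteq> ?i0"
      have "\<bar>fst y $ j\<bar> = s * \<bar>ux $ j\<bar>" unfolding y x0_def using j s(1) by (simp add: abs_mult)
      also have "\<dots> \<le> 1 * 1"
        using s(1) component_le_norm_cart[of ux j] nx by (intro mult_mono) auto
      finally show "\<bar>fst y $ j\<bar> \<le> 1" by simp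
    qed
    then show "y \<in> Kset a" unfolding Kset_def by blast
  qed
qed



lemma ld: "line_dist p q = norm (snd p - snd q) + norm (fst p - fst q)"
  by (cases p, cases q) (simp add: line_dist_def)

lemma ld_sym: "line_dist p q = line_dist q p"
  unfolding ld by (simp add: norm_minus_commute)

lemma ld_tri: "line_dist p r \<le> line_dist p q + line_dist q r"
proof -
  have "norm (snd p - snd r) \<le> norm (snd p - snd q) + norm (snd q - snd r)"
    using norm_triangle_ineq[of "snd p - snd q" "snd q - snd r"] by simp
  moreover have "norm (fst p - fst r) \<le> norm (fst p - fst q) + norm (fst q - fst r)"
    using norm_triangle_ineq[of "fst p - fst q" "fst q - fst r"] by simp
  ultimately show ?thesis unfolding ld by linarith
qed

lemma ld_dist: "line_dist p q \<le> 2 * dist p q"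
proof -
  have "norm (snd p - snd q) \<le> norm (p - q)"
    using norm_snd_le[of "snd p - snd q" "fst p - fst q"] by (cases p, cases q) simp
  moreover have "norm (fst p - fst q) \<le> norm (p - q)"
    using norm_fst_le[of "fst p - fst q" "snd p - snd q"] by (cases p, cases q) simp
  ultimately show ?thesis unfolding ld dist_norm by linarith
qed

lemma ld_comp1: "\<bar>fst p $ j - fst q $ j\<bar> \<le> line_dist p q"
proof -
  have "\<bar>fst p $ j - fst q $ j\<bar> \<le> norm (fst p - fst q)"
    using component_le_norm_cart[of "fst p - fst q" j] by simp
  then show ?thesis unfolding ld by (smt (verit) norm_ge_zero)
qed

lemma ld_comp2: "\<bar>snd p $ j - snd q $ j\<bar> \<le> line_dist p q"
proof -
  have "\<bar>snd p $ j - snd q $ j\<bar> \<le> norm (snd p - snd q)"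
    using component_le_norm_cart[of "snd p - snd q" j] by simp
  then show ?thesis unfolding ld by (smt (verit) norm_ge_zero)
qed

lemma baire_cover:
  fixes E :: "((real^'m::finite) \<times> (real^'m)) set" and F :: "nat \<Rightarrow> _"
  assumes E: "compact E" "E \<noteq> {}" and cov: "E \<subseteq> (\<Union>i. F i)"
  shows "\<exists>i x \<rho>. x \<in> E \<and> \<rho> > 0 \<and> E \<inter> ball x \<rho> \<subseteq> closure (F i)"
proof (rule ccontr)
  assume no: "\<not> ?thesis"
  let ?G = "range (\<lambda>i. E - closure (F i))"
  have EG: "E \<subseteq> closure (\<Inter>?G)"
  proof (rule Baire)
    show "closed E" using E(1) by (rule compact_imp_closed)
    show "countable ?G" by simp
    fix T assume "T \<in> ?G"
    then obtain i where T: "T = E - closure (F i)" by auto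
    have "T = E \<inter> (- closure (F i))" unfolding T by auto
    then have "openin (top_of_set E) T" by (simp add: openin_open_Int open_Compl)
    moreover have "E \<subseteq> closure T"
    proof
      fix x assume x: "x \<in> E"
      show "x \<in> closure T" unfolding closure_approachable
      proof (intro allI impI)
        fix e :: real assume e: "e > 0"
        have "\<not> (E \<inter> ball x e \<subseteq> closure (F i))" using no x e by blast
        then obtain y where y: "y \<in> E" "y \<in> ball x e" "y \<notin> closure (F i)" by blast
        then show "\<exists>y\<in>T. dist y x < e" unfolding T by (auto simp: dist_commute)
      qed
    qed
    ultimately show "openin (top_of_set E) T \<and> E \<subseteq> closure T" by blast
  qed
  obtain e0 where e0: "e0 \<in> E" using E(2) by blast
  have e0c: "e0 \<in> closure (\<Inter>?G)" using EG e0 by (rule subsetD)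
  have "\<Inter>?G \<noteq> {}"
  proof
    assume "\<Inter>?G = {}"
    then have ce: "closure (\<Inter>?G) = {}" by (simp only: closure_empty)
    show False using e0c unfolding ce by (rule emptyE)
  qed
  then obtain y where y: "y \<in> \<Inter>?G" by blast
  have "y \<in> E" using y by auto
  then obtain i where "y \<in> F i" using cov by blast
  then have "y \<in> closure (F i)" using closure_subset by blast
  moreover have "y \<notin> closure (F i)" using y by auto
  ultimately show False by blast
qed


lemma half_pow_powr: "(1/2::real)^k = 2 powr (- real k)"
proof -
  have "(2::real) powr (- real k) = inverse (2 powr real k)" by (rule powr_minus)
  also have "(2::real) powr real k = 2^k" by (rule powr_realpow) simp
  also have "inverse ((2::real)^k) = (1/2)^k" by (simp add: power_one_over inverse_eq_divide)
  finally show ?thesis by simp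
qed

lemma nat_sep:
  assumes "(a::nat) \<noteq> b" shows "1 \<le> \<bar>real a - real b\<bar>"
proof (cases "a < b")
  case True
  then have "Suc a \<le> b" by simp
  then have "real (Suc a) \<le> real b" by (simp only: of_nat_le_iff)
  then show ?thesis using abs_ge_minus_self[of "real a - real b"] by simp
next
  case False
  then have "Suc b \<le> a" using assms by simp
  then have "real (Suc b) \<le> real a" by (simp only: of_nat_le_iff)
  then show ?thesis using abs_ge_self[of "real a - real b"] by simp
qed

lemma nat_le_36pow: "k \<le> (36::nat)^k"
proof -
  have "k < 2^k" by (rule less_exp)
  moreover have "(2::nat)^k \<le> 36^k" by (intro power_mono) auto
  ultimately show ?thesis by linarith
qed

lemma ld_self: "line_dist p p = 0"
  unfolding ld by simp

lemma grid_bound: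
  fixes n N :: nat and T d n0 :: nat
  assumes n: "n \<ge> 1" and T: "N + 2*n + 1 \<le> T" and n0: "n0 = T" and d: "d = 5*T"
  shows "real N \<le> real (((2::nat)^d) ^ n * ((2::nat)^d) ^ n) * ((1/2)^(n0+d) / 4) powr (real n + 1/2)"
proof -
  have e1: "real (((2::nat)^d) ^ n * ((2::nat)^d) ^ n) = 2 powr (real (2*n*d))"
  proof -
    have "real (((2::nat)^d) ^ n * ((2::nat)^d) ^ n) = ((2::real)^d)^n * ((2::real)^d)^n" by simp
    also have "\<dots> = (2::real)^(d*n) * 2^(d*n)" by (simp only: power_mult)
    also have "\<dots> = (2::real)^(d*n + d*n)" by (simp only: power_add)
    also have "d*n + d*n = 2*n*d" by simp
    also have "(2::real)^(2*n*d) = 2 powr (real (2*n*d))" by (simp only: powr_realpow[symmetric])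
    finally show ?thesis .
  qed
  have e2: "(1/2::real)^(n0+d) / 4 = 2 powr (-(real (n0+d) + 2))"
  proof -
    have "(1/2::real)^(n0+d) / 4 = (1/2)^(n0+d+2)" by (simp add: power_add)
    also have "\<dots> = 2 powr (- real (n0+d+2))" by (rule half_pow_powr)
    finally show ?thesis by simp
  qed
  have "real (((2::nat)^d) ^ n * ((2::nat)^d) ^ n) * ((1/2)^(n0+d) / 4) powr (real n + 1/2)
      = 2 powr (real (2*n*d) + (-(real (n0+d) + 2)) * (real n + 1/2))"
    unfolding e1 e2 powr_powr by (simp add: powr_add)
  also have "real (2*n*d) + (-(real (n0+d) + 2)) * (real n + 1/2) = (4 * real n - 3) * real T - 2 * real n - 1"
    unfolding n0 d by (simp add: algebra_simps)
  also have "2 powr ((4 * real n - 3) * real T - 2 * real n - 1) \<ge> 2 powr (real N)"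
  proof (rule powr_mono)
    have "1 \<le> 4 * real n - 3" using n by simp
    then have "1 * real T \<le> (4 * real n - 3) * real T" by (intro mult_right_mono) auto
    then have "real T \<le> (4 * real n - 3) * real T" by simp
    then show "real N \<le> (4 * real n - 3) * real T - 2 * real n - 1" using T by linarith
  qed simp
  moreover have "2 powr (real N) \<ge> real N"
  proof -
    have "real N < 2 ^ N" using less_exp[of N] by (metis of_nat_less_iff of_nat_numeral of_nat_power)
    then show ?thesis by (simp add: powr_realpow)
  qed
  ultimately show ?thesis by linarith
qed


lemma ball_img: "(\<forall>x\<in>f ` A. P x) \<longleftrightarrow> (\<forall>y\<in>A. P (f y))"
  by blast

lemma premeasure_inf:
  fixes A :: "((real^'m::finite) \<times> (real^'m)) set"
  assumes x: "x \<in> Vc \<times> Vc" and \<rho>: "\<rho> > 0" and sub: "(Vc \<times> Vc) \<inter> ball x \<rho> \<subseteq> closure A"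
  shows "packing_premeasure line_dist (real CARD('m) + 1/2) A = \<infinity>"
proof -
  let ?n = "CARD('m)"
  let ?s = "real ?n + 1/2"
  have n1: "?n \<ge> 1" by (simp add: Suc_leI)
  have main: "\<exists>P\<in>{P. finite P \<and> (\<forall>(c, r)\<in>P. c \<in> A \<and> 0 < r \<and> r \<le> \<delta>) \<and>
      (\<forall>(c, r)\<in>P. \<forall>(c', r')\<in>P. (c, r) \<noteq> (c', r') \<longrightarrow> mball line_dist c r \<inter> mball line_dist c' r' = {})}.
      of_nat N \<le> (\<Sum>(c, r)\<in>P. ennreal ((2 * r) powr ?s))" if \<delta>: "\<delta> > 0" for \<delta> N
  proof -
    have mpos: "0 < min (\<rho> / (4 * real ?n)) \<delta>" using \<rho> \<delta> n1 by simp
    obtain m where m: "(1/2::real)^m < min (\<rho> / (4 * real ?n)) \<delta>"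
      using real_arch_pow_inv[OF mpos, of "1/2"] by auto
    define kk where "kk = max m (N + 2 * ?n + 1)"
    define T where "T = (36::nat)^kk"
    have Tkk: "kk \<le> T" unfolding T_def by (rule nat_le_36pow)
    define d where "d = 5*T"
    define n0 where "n0 = T"
    have G: "\<And>l. n0 < l \<Longrightarrow> l \<le> n0 + d \<Longrightarrow> l \<in> cG"
      using full_block_G[of kk] unfolding n0_def d_def T_def by auto
    define h :: real where "h = (1/2)^(n0 + d)"
    have h0: "h > 0" unfolding h_def by simp
    define R where "R = (2::nat)^d"
    have Rh: "real R * h = (1/2)^n0"
      unfolding R_def h_def by (simp add: power_add power_one_over)
    have half_m: "(1/2::real)^n0 \<le> (1/2)^m"
      using Tkk unfolding n0_def kk_def by (intro power_decreasing) auto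
    have h_le: "h \<le> (1/2)^n0" unfolding h_def by (intro power_decreasing) auto
    obtain xv xa where xx: "x = (xv, xa)" "xv \<in> Vc" "xa \<in> Vc" using x by auto
    have "\<forall>j. \<exists>p. p \<in> cD n0 \<and> p \<le> xv$j \<and> xv$j \<le> p + (1/2)^n0"
      using xx(2) Cset_approx unfolding Vc_def by blast
    then obtain pv where pv: "\<And>j. pv j \<in> cD n0 \<and> pv j \<le> xv$j \<and> xv$j \<le> pv j + (1/2)^n0"
      by metis
    have "\<forall>j. \<exists>p. p \<in> cD n0 \<and> p \<le> xa$j \<and> xa$j \<le> p + (1/2)^n0"
      using xx(3) Cset_approx unfolding Vc_def by blast
    then obtain pa where pa: "\<And>j. pa j \<in> cD n0 \<and> pa j \<le> xa$j \<and> xa$j \<le> pa j + (1/2)^n0"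
      by metis
    define Ix where "Ix = (PiE UNIV (\<lambda>_::'m. {..<R})) \<times> (PiE UNIV (\<lambda>_::'m. {..<R}))"
    have finIx: "finite Ix" unfolding Ix_def by (intro finite_cartesian_product finite_PiE) auto
    define yf where "yf \<iota> = ((\<chi> j. pv j + real (fst \<iota> j) * h), (\<chi> j. pa j + real (snd \<iota> j) * h))"
      for \<iota> :: "('m \<Rightarrow> nat) \<times> ('m \<Rightarrow> nat)"
    have coordC: "p + real k * h \<in> Cset" if pD: "p \<in> cD n0" and kR: "k < R" for p k
    proof -
      have kd: "k < 2^d" using kR unfolding R_def .
      have "p + real k * (1/2)^(n0+d) \<in> cD (n0+d)"
        by (rule full_block[OF G pD kd])
      then show ?thesis unfolding h_def by (rule cD_sub_Cset)
    qed
    have coordD: "\<bar>p + real k * h - z\<bar> \<le> 2 * (1/2)^n0" if "p \<le> z" "z \<le> p + (1/2)^n0" "k < R" for p z k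
    proof -
      have "real k \<le> real R" using that(3) by simp
      then have "real k * h \<le> real R * h" using h0 by (intro mult_right_mono) auto
      then have "real k * h \<le> (1/2)^n0" using Rh by simp
      moreover have "0 \<le> real k * h" using h0 by simp
      ultimately show ?thesis using that(1,2) by (simp add: abs_le_iff)
    qed
    have yE: "yf \<iota> \<in> Vc \<times> Vc" if "\<iota> \<in> Ix" for \<iota>
    proof -
      have "fst \<iota> j < R" "snd \<iota> j < R" for j using that unfolding Ix_def by (auto simp: PiE_iff)
      then show ?thesis unfolding yf_def Vc_def using coordC pv pa by auto
    qed
    have ydist: "dist (yf \<iota>) x < \<rho>" if "\<iota> \<in> Ix" for \<iota>
    proof -
      have fr: "fst \<iota> j < R" "snd \<iota> j < R" for j using that unfolding Ix_def by (auto simp: PiE_iff)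
      define dv where "dv = fst (yf \<iota>) - xv"
      define da where "da = snd (yf \<iota>) - xa"
      have "dist (yf \<iota>) x = norm (dv, da)" unfolding dist_norm dv_def da_def xx(1) by (cases "yf \<iota>") simp
      also have "\<dots> \<le> norm dv + norm da" by (rule norm_Pair_le)
      also have "norm dv \<le> (\<Sum>j\<in>UNIV. \<bar>dv $ j\<bar>)" by (rule norm_le_l1_cart)
      also have "(\<Sum>j\<in>UNIV. \<bar>dv $ j\<bar>) \<le> (\<Sum>j\<in>(UNIV::'m set). 2 * (1/2)^n0)"
      proof (rule sum_mono)
        fix j show "\<bar>dv $ j\<bar> \<le> 2 * (1/2)^n0"
          unfolding dv_def yf_def using coordD[of "pv j" "xv$j" "fst \<iota> j"] pv[of j] fr(1)[of j] by simp
      qed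
      also have "norm da \<le> (\<Sum>j\<in>UNIV. \<bar>da $ j\<bar>)" by (rule norm_le_l1_cart)
      also have "(\<Sum>j\<in>UNIV. \<bar>da $ j\<bar>) \<le> (\<Sum>j\<in>(UNIV::'m set). 2 * (1/2)^n0)"
      proof (rule sum_mono)
        fix j show "\<bar>da $ j\<bar> \<le> 2 * (1/2)^n0"
          unfolding da_def yf_def using coordD[of "pa j" "xa$j" "snd \<iota> j"] pa[of j] fr(2)[of j] by simp
      qed
      also have "(\<Sum>j\<in>(UNIV::'m set). 2 * (1/2::real)^n0) + (\<Sum>j\<in>(UNIV::'m set). 2 * (1/2)^n0)
          = 4 * real ?n * (1/2)^n0" by simp
      also have "\<dots> \<le> 4 * real ?n * (1/2)^m" using half_m by (intro mult_left_mono) auto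
      also have "\<dots> < 4 * real ?n * (\<rho> / (4 * real ?n))" using m n1 by (intro mult_strict_left_mono) auto
      also have "\<dots> = \<rho>" using n1 by simp
      finally show ?thesis by simp
    qed
    have "\<exists>z. z \<in> A \<and> dist z (yf \<iota>) < h/8" if "\<iota> \<in> Ix" for \<iota>
    proof -
      have "yf \<iota> \<in> closure A" using sub yE[OF that] ydist[OF that] by (auto simp: dist_commute)
      moreover have "h/8 > 0" using h0 by simp
      ultimately obtain z where "z \<in> A" "dist z (yf \<iota>) < h/8" unfolding closure_approachable by blast
      then show ?thesis by blast
    qed
    then obtain zf where zf: "\<And>\<iota>. \<iota> \<in> Ix \<Longrightarrow> zf \<iota> \<in> A \<and> dist (zf \<iota>) (yf \<iota>) < h/8" by metis
    have zy: "line_dist (zf \<iota>) (yf \<iota>) < h/4" if "\<iota> \<in> Ix" for \<iota>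
      using ld_dist[of "zf \<iota>" "yf \<iota>"] zf[OF that] by linarith
    have ysep: "h \<le> line_dist (yf \<iota>) (yf \<iota>')" if "\<iota> \<in> Ix" "\<iota>' \<in> Ix" "\<iota> \<noteq> \<iota>'" for \<iota> \<iota>'
    proof (cases "fst \<iota> = fst \<iota>'")
      case False
      then obtain j where j: "fst \<iota> j \<noteq> fst \<iota>' j" by auto
      have e: "fst (yf \<iota>) $ j - fst (yf \<iota>') $ j = (real (fst \<iota> j) - real (fst \<iota>' j)) * h"
        unfolding yf_def by (simp add: algebra_simps)
      have "1 * h \<le> \<bar>real (fst \<iota> j) - real (fst \<iota>' j)\<bar> * h" using nat_sep[OF j] h0 by (intro mult_right_mono) auto
      then have "h \<le> \<bar>real (fst \<iota> j) - real (fst \<iota>' j)\<bar> * h" by simp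
      also have "\<dots> = \<bar>fst (yf \<iota>) $ j - fst (yf \<iota>') $ j\<bar>"
        unfolding e using h0 by (simp add: abs_mult)
      also have "\<dots> \<le> line_dist (yf \<iota>) (yf \<iota>')" by (rule ld_comp1)
      finally show ?thesis .
    next
      case True
      then have "snd \<iota> \<noteq> snd \<iota>'" using that(3) by (cases \<iota>, cases \<iota>') auto
      then obtain j where j: "snd \<iota> j \<noteq> snd \<iota>' j" by auto
      have e: "snd (yf \<iota>) $ j - snd (yf \<iota>') $ j = (real (snd \<iota> j) - real (snd \<iota>' j)) * h"
        unfolding yf_def by (simp add: algebra_simps)
      have "1 * h \<le> \<bar>real (snd \<iota> j) - real (snd \<iota>' j)\<bar> * h" using nat_sep[OF j] h0 by (intro mult_right_mono) auto
      then have "h \<le> \<bar>real (snd \<iota> j) - real (snd \<iota>' j)\<bar> * h" by simp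
      also have "\<dots> = \<bar>snd (yf \<iota>) $ j - snd (yf \<iota>') $ j\<bar>"
        unfolding e using h0 by (simp add: abs_mult)
      also have "\<dots> \<le> line_dist (yf \<iota>) (yf \<iota>')" by (rule ld_comp2)
      finally show ?thesis .
    qed
    have zsep: "h/2 < line_dist (zf \<iota>) (zf \<iota>')" if "\<iota> \<in> Ix" "\<iota>' \<in> Ix" "\<iota> \<noteq> \<iota>'" for \<iota> \<iota>'
    proof -
      have "line_dist (yf \<iota>) (yf \<iota>') \<le> line_dist (yf \<iota>) (zf \<iota>) + line_dist (zf \<iota>) (yf \<iota>')" by (rule ld_tri)
      also have "line_dist (zf \<iota>) (yf \<iota>') \<le> line_dist (zf \<iota>) (zf \<iota>') + line_dist (zf \<iota>') (yf \<iota>')" by (rule ld_tri)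
      finally have "line_dist (yf \<iota>) (yf \<iota>') \<le> line_dist (yf \<iota>) (zf \<iota>) + (line_dist (zf \<iota>) (zf \<iota>') + line_dist (zf \<iota>') (yf \<iota>'))"
        by simp
      moreover have "line_dist (yf \<iota>) (zf \<iota>) < h/4" using zy[OF that(1)] ld_sym by metis
      moreover have "line_dist (zf \<iota>') (yf \<iota>') < h/4" using zy[OF that(2)] .
      ultimately show ?thesis using ysep[OF that] by linarith
    qed
    define r where "r = h/8"
    have r0: "r > 0" unfolding r_def using h0 by simp
    define Pk where "Pk = (\<lambda>\<iota>. (zf \<iota>, r)) ` Ix"
    have inj: "inj_on (\<lambda>\<iota>. (zf \<iota>, r)) Ix"
    proof (rule inj_onI)
      fix \<iota> \<iota>' assume a: "\<iota> \<in> Ix" "\<iota>' \<in> Ix" "(zf \<iota>, r) = (zf \<iota>', r)"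
      show "\<iota> = \<iota>'"
      proof (rule ccontr)
        assume "\<iota> \<noteq> \<iota>'"
        then have "h/2 < line_dist (zf \<iota>) (zf \<iota>')" using zsep a by blast
        moreover have "line_dist (zf \<iota>) (zf \<iota>') = 0" using a(3) ld_self by simp
        ultimately show False using h0 by simp
      qed
    qed
    have rdelta: "r \<le> \<delta>"
    proof -
      have "r \<le> h" unfolding r_def using h0 by simp
      also have "\<dots> \<le> (1/2)^m" using h_le half_m by linarith
      also have "\<dots> \<le> \<delta>" using m by simp
      finally show ?thesis .
    qed
    have disj: "mball line_dist (zf \<iota>) r \<inter> mball line_dist (zf \<iota>') r = {}"
      if "\<iota> \<in> Ix" "\<iota>' \<in> Ix" "\<iota> \<noteq> \<iota>'" for \<iota> \<iota>'
    proof (rule ccontr)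
      assume "mball line_dist (zf \<iota>) r \<inter> mball line_dist (zf \<iota>') r \<noteq> {}"
      then obtain y where y: "line_dist (zf \<iota>) y \<le> r" "line_dist (zf \<iota>') y \<le> r"
        unfolding mball_def by auto
      have "line_dist (zf \<iota>) (zf \<iota>') \<le> line_dist (zf \<iota>) y + line_dist y (zf \<iota>')" by (rule ld_tri)
      also have "line_dist y (zf \<iota>') = line_dist (zf \<iota>') y" by (rule ld_sym)
      finally have "line_dist (zf \<iota>) (zf \<iota>') \<le> 2 * r" using y by linarith
      then show False using zsep[OF that] h0 unfolding r_def by linarith
    qed
    have PkP: "Pk \<in> {P. finite P \<and> (\<forall>(c, r)\<in>P. c \<in> A \<and> 0 < r \<and> r \<le> \<delta>) \<and>
      (\<forall>(c, r)\<in>P. \<forall>(c', r')\<in>P. (c, r) \<noteq> (c', r') \<longrightarrow> mball line_dist c r \<inter> mball line_dist c' r' = {})}"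
    proof (intro CollectI conjI)
      show "finite Pk" unfolding Pk_def using finIx by simp
      show "\<forall>(c, r')\<in>Pk. c \<in> A \<and> 0 < r' \<and> r' \<le> \<delta>" unfolding Pk_def using zf r0 rdelta by auto
      show "\<forall>(c, r1)\<in>Pk. \<forall>(c', r')\<in>Pk. (c, r1) \<noteq> (c', r') \<longrightarrow> mball line_dist c r1 \<inter> mball line_dist c' r' = {}"
        unfolding Pk_def ball_img case_prod_conv
      proof (intro ballI impI)
        fix \<iota> \<iota>' assume a: "\<iota> \<in> Ix" "\<iota>' \<in> Ix" "(zf \<iota>, r) \<noteq> (zf \<iota>', r)"
        then have "\<iota> \<noteq> \<iota>'" by auto
        then show "mball line_dist (zf \<iota>) r \<inter> mball line_dist (zf \<iota>') r = {}" using disj a(1,2) by blast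
      qed
    qed
    have cardIx: "card Ix = R^?n * R^?n"
      unfolding Ix_def by (simp add: card_cartesian_product card_PiE)
    have "(\<Sum>(c, r')\<in>Pk. ennreal ((2 * r') powr ?s)) = (\<Sum>\<iota>\<in>Ix. ennreal ((2 * r) powr ?s))"
      unfolding Pk_def by (subst sum.reindex[OF inj]) simp
    also have "\<dots> = of_nat (card Ix) * ennreal ((2 * r) powr ?s)" by simp
    also have "\<dots> = ennreal (real (card Ix)) * ennreal ((h/4) powr ?s)"
      by (simp add: r_def ennreal_of_nat_eq_real_of_nat)
    also have "\<dots> = ennreal (real (card Ix) * (h/4) powr ?s)"
      by (rule ennreal_mult[symmetric]) auto
    also have "\<dots> = ennreal (real (R^?n * R^?n) * (h/4) powr ?s)" unfolding cardIx ..
    finally have sumeq: "(\<Sum>(c, r')\<in>Pk. ennreal ((2 * r') powr ?s)) = ennreal (real (R^?n * R^?n) * (h/4) powr ?s)" .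
    have "real N \<le> real (R^?n * R^?n) * (h/4) powr ?s"
      unfolding R_def h_def
      by (rule grid_bound[OF n1 _ n0_def d_def]) (use Tkk in \<open>simp add: kk_def\<close>)
    then have le: "of_nat N \<le> (\<Sum>(c, r')\<in>Pk. ennreal ((2 * r') powr ?s))"
      unfolding sumeq ennreal_of_nat_eq_real_of_nat by (rule ennreal_leI)
    show ?thesis by (rule bexI[where x=Pk]) (fact le, fact PkP)
  qed
  have "\<forall>\<delta>\<in>{0<..}. (SUP P\<in>{P. finite P \<and> (\<forall>(c, r)\<in>P. c \<in> A \<and> 0 < r \<and> r \<le> \<delta>) \<and>
      (\<forall>(c, r)\<in>P. \<forall>(c', r')\<in>P. (c, r) \<noteq> (c', r') \<longrightarrow> mball line_dist c r \<inter> mball line_dist c' r' = {})}.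
      (\<Sum>(c, r)\<in>P. ennreal ((2 * r) powr ?s))) = top"
  proof
    fix \<delta> :: real assume "\<delta> \<in> {0<..}"
    then have pos: "\<delta> > 0" by simp
    show "(SUP P\<in>{P. finite P \<and> (\<forall>(c, r)\<in>P. c \<in> A \<and> 0 < r \<and> r \<le> \<delta>) \<and>
      (\<forall>(c, r)\<in>P. \<forall>(c', r')\<in>P. (c, r) \<noteq> (c', r') \<longrightarrow> mball line_dist c r \<inter> mball line_dist c' r' = {})}.
      (\<Sum>(c, r)\<in>P. ennreal ((2 * r) powr ?s))) = top"
      by (rule ennreal_SUP_eq_top, rule main[OF pos])
  qed
  then show ?thesis unfolding packing_premeasure_def infinity_ennreal_def by (rule INF_top_conv(1)[THEN iffD2])
qed


lemma Vc_ne: "0 \<in> Vc"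
  unfolding Vc_def using zero_in_Cset by simp

lemma pm_inf:
  fixes X :: "((real^'m::finite) \<times> (real^'m)) set"
  assumes X: "Vc \<times> Vc \<subseteq> X"
  shows "packing_measure line_dist (real CARD('m) + 1/2) X = \<infinity>"
proof -
  let ?s = "real CARD('m) + 1/2"
  have cV: "compact ((Vc :: (real^'m) set) \<times> (Vc :: (real^'m) set))" by (intro compact_Times compact_Vc)
  have nV: "(Vc :: (real^'m) set) \<times> (Vc :: (real^'m) set) \<noteq> {}" using Vc_ne by blast
  have "\<forall>F\<in>{F. X \<subseteq> (\<Union>i. F i)}. (\<Sum>i. packing_premeasure line_dist ?s (F i)) = top"
  proof
    fix F :: "nat \<Rightarrow> ((real^'m) \<times> (real^'m)) set" assume "F \<in> {F. X \<subseteq> (\<Union>i. F i)}"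
    then have cov: "Vc \<times> Vc \<subseteq> (\<Union>i. F i)" using X by auto
    obtain i x \<rho> where ix: "x \<in> Vc \<times> Vc" "\<rho> > 0" "(Vc \<times> Vc) \<inter> ball x \<rho> \<subseteq> closure (F i)"
      using baire_cover[OF cV nV cov] by blast
    have inf: "packing_premeasure line_dist ?s (F i) = \<infinity>" by (rule premeasure_inf[OF ix])
    have "sum (\<lambda>i. packing_premeasure line_dist ?s (F i)) {i} \<le> (\<Sum>i. packing_premeasure line_dist ?s (F i))"
      by (rule sum_le_suminf) (auto intro: summableI)
    then have "packing_premeasure line_dist ?s (F i) \<le> (\<Sum>i. packing_premeasure line_dist ?s (F i))" by simp
    then show "(\<Sum>i. packing_premeasure line_dist ?s (F i)) = top" using inf by (simp add: top_unique)
  qed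
  then show ?thesis unfolding packing_measure_def infinity_ennreal_def by (rule INF_top_conv(1)[THEN iffD2])
qed

lemma nonsticky_of:
  fixes K :: "((real^'m::finite) \<times> real) set"
  assumes "Vc \<times> Vc \<subseteq> line_set K"
  shows "non_sticky K"
proof -
  let ?s = "real CARD('m) + 1/2"
  have "ereal ?s \<in> {ereal s | s. 0 \<le> s \<and> packing_measure line_dist s (line_set K) = \<infinity>}"
    using pm_inf[OF assms] by auto
  then have "ereal ?s \<le> packing_dim line_dist (line_set K)" unfolding packing_dim_def by (rule Sup_upper)
  moreover have "ereal (real CARD('m)) < ereal ?s" by simp
  ultimately show ?thesis unfolding non_sticky_def by (rule order.strict_trans2[rotated])
qed

lemma line_set_mono: "K \<subseteq> K' \<Longrightarrow> line_set K \<subseteq> line_set K'"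
  unfolding line_set_def by blast

lemma Vc_line_set: "(Vc :: (real^'m::finite) set) \<times> Vc \<subseteq> line_set (Kp :: ((real^'m) \<times> real) set)"
proof
  fix z :: "(real^'m) \<times> (real^'m)" assume z: "z \<in> Vc \<times> Vc"
  obtain v av where zz: "z = (v, av)" "v \<in> Vc" "av \<in> Vc" using z by auto
  define w :: "(real^'m) \<times> real" where "w = (v, 1)"
  have nw: "norm w \<ge> 1" unfolding w_def using norm_snd_le[of "1::real" v] by simp
  define c where "c = 1 / norm w"
  have c0: "c > 0" "c \<le> 1" unfolding c_def using nw by (auto simp: divide_le_eq)
  define p :: "(real^'m) \<times> real" where "p = (av, 0)"
  define q where "q = p + c *\<^sub>R w"
  have wn0: "w \<noteq> 0" using nw by auto
  have "dist p q = 1" unfolding q_def dist_norm c_def using nw wn0 by simp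
  moreover have "closed_segment p q \<subseteq> kline v av \<inter> Kp"
  proof
    fix y assume "y \<in> closed_segment p q"
    then obtain u where u: "0 \<le> u" "u \<le> 1" "y = (1 - u) *\<^sub>R p + u *\<^sub>R q" unfolding closed_segment_def by auto
    have y: "y = (av + (u * c) *\<^sub>R v, u * c)" unfolding u(3) q_def p_def w_def by (simp add: algebra_simps)
    have uc: "u * c \<in> {0..1}" using u c0 by (auto intro: mult_le_one)
    show "y \<in> kline v av \<inter> Kp" unfolding y kline_def Kp_def using zz uc by blast
  qed
  ultimately show "z \<in> line_set Kp" unfolding line_set_def zz by blast
qed

lemma Kset_sub_lift:
  "(Kset a :: ((real^'m::finite) \<times> real) set) \<subseteq> lift (KB a \<union> prod.swap ` KB a \<union> Qset) 2 undefined"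
proof
  fix z :: "(real^'m) \<times> real" assume z: "z \<in> Kset a"
  show "z \<in> lift (KB a \<union> prod.swap ` KB a \<union> Qset) 2 undefined"
  proof (cases "z \<in> Kp")
    case False
    then have "z \<in> lift (KB a \<union> prod.swap ` KB a) 1 undefined" using z unfolding Kset_def by auto
    then show ?thesis unfolding lift_def by auto
  next
    case True
    then obtain v av t where vt: "z = (av + t *\<^sub>R v, t)" "v \<in> Vc" "av \<in> Vc" "t \<in> {0..1}"
      unfolding Kp_def by blast
    have "(fst z $ undefined, snd z) \<in> Qset" unfolding Qset_def vt(1) using vt(2-4) unfolding Vc_def by auto
    moreover have "\<bar>fst z $ j\<bar> \<le> 2" for j
    proof -
      have a: "0 \<le> av $ j" "av $ j \<le> 1" "0 \<le> v $ j" "v $ j \<le> 1"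
        using vt(2,3) Cset_range unfolding Vc_def by auto
      have "0 \<le> t * v $ j" "t * v $ j \<le> 1" using a vt(4) by (auto intro: mult_le_one)
      then show ?thesis unfolding vt(1) using a by simp
    qed
    ultimately show ?thesis unfolding lift_def by auto
  qed
qed

lemma main_exists: "\<exists>K :: ((real^'m::finite) \<times> real) set. kakeya_set K \<and> non_sticky K \<and> emeasure lborel K = 0"
proof -
  obtain a where a: "\<forall>v\<in>{-1..1}. \<bar>a v\<bar> \<le> 1" "\<forall>e>0. boxcov (KB a) e" using besicovitch_planar by blast
  have K: "kakeya_set (Kset a :: ((real^'m) \<times> real) set)" by (rule kakeya_Kset[OF a(1)])
  have "Vc \<times> Vc \<subseteq> line_set (Kset a :: ((real^'m) \<times> real) set)"
    using Vc_line_set line_set_mono[of "Kp" "Kset a"] unfolding Kset_def by blast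
  then have N: "non_sticky (Kset a :: ((real^'m) \<times> real) set)" by (rule nonsticky_of)
  have bc: "boxcov (KB a \<union> prod.swap ` KB a \<union> Qset) e" if e: "e > 0" for e
  proof -
    have "boxcov (KB a \<union> prod.swap ` KB a \<union> Qset) (e/3 + e/3 + e/3)"
      using e a(2) boxcov_swap boxcov_Qset by (intro boxcov_Un) auto
    then show ?thesis by simp
  qed
  have Z: "emeasure lborel (Kset a :: ((real^'m) \<times> real) set) = 0"
    by (rule null_lift[OF _ _ Kset_sub_lift]) (use bc in auto)
  show ?thesis using K N Z by blast
qed

theorem theorem1p2:
  shows "(\<exists>K :: ((real^1) \<times> real) set.
            kakeya_set K \<and> non_sticky K \<and> emeasure lborel K = 0) \<and>
         (CARD('m::finite) \<ge> 2 \<longrightarrow>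
            (\<exists>K :: ((real^'m) \<times> real) set.
               kakeya_set K \<and> non_sticky K \<and> emeasure lborel K = 0))"
  by (intro conjI impI main_exists)


end
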